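(* Fix $k\in\mathbb N$ and let $N_n(k)$ be the number of clades with exactly $k$ leaves in the critical beta-splitting tree $\mathrm{DTCS}(n)$. Let $E_n=\frac1n\mathbb E[N_n(k)]$. There exists a constant $\mu=\mu(k)$ such that $E_n=\mu+O(1/n)$.
   Context: For $m\ge2$, $q_m(i)=\frac{m}{2h_{m-1}}\frac{1}{i(m-i)}$, $1\le i\le m-1$, with $h_{m-1}=\sum_{j=1}^{m-1}1/j$. $\mathrm{DTCS}(n)$ is the random binary tree with leaves $[n]$ obtained by splitting $[n]$ into $\{1,\dots,L_n\}$ and $\{L_n+1,\dots,n\}$ with $L_n\sim q_n$, and recursively and independently splitting each interval of size $m\ge2$ according to $q_m$, stopping at size $1$. A clade (fringe subtree) is a vertex together with all its descendants; its size is its number of leaves. *)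

theory Defs
  imports "HOL-Probability.Probability" "HOL-Library.Landau_Symbols"
begin

definition q_split :: "nat \<Rightarrow> nat \<Rightarrow> real" where
  "q_split m i = (if 1 \<le> i \<and> i \<le> m - 1
     then real m / (2 * (\<Sum>j=1..m-1. 1 / real j)) * (1 / (real i * real (m - i)))
     else 0)"

definition q_pmf :: "nat \<Rightarrow> nat pmf" where
  "q_pmf m = embed_pmf (q_split m)"

text \<open>Binary tree shapes; the leaves of a tree of size n are labelled 1..n left to right,
  so the shape determines the labelled tree.\<close>
datatype tree = Leaf | Node tree tree

fun leaves :: "tree \<Rightarrow> nat" where
  "leaves Leaf = 1"
| "leaves (Node l r) = leaves l + leaves r"

fun nclades :: "nat \<Rightarrow> tree \<Rightarrow> nat" where
  "nclades k Leaf = (if k = 1 then 1 else 0)"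
| "nclades k (Node l r) = (if leaves (Node l r) = k then 1 else 0) + nclades k l + nclades k r"

text \<open>Recursive splitting, with a fuel parameter (fuel n suffices for size n, since sizes
  strictly decrease).\<close>
fun dtcs_aux :: "nat \<Rightarrow> nat \<Rightarrow> tree pmf" where
  "dtcs_aux 0 n = return_pmf Leaf"
| "dtcs_aux (Suc f) n =
     (if n \<le> 1 then return_pmf Leaf
      else bind_pmf (q_pmf n) (\<lambda>i.
             bind_pmf (dtcs_aux f i) (\<lambda>l.
               bind_pmf (dtcs_aux f (n - i)) (\<lambda>r. return_pmf (Node l r)))))"

definition DTCS :: "nat \<Rightarrow> tree pmf" where
  "DTCS n = dtcs_aux n n"

end

theory Submission
  imports Defs "HOL-Computational_Algebra.Polynomial"
begin


definition PK :: "nat \<Rightarrow> real poly" where "PK K = (\<Prod>k\<in>{1..K}. [:real k, 1:])"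
definition QK :: "nat \<Rightarrow> real poly" where
  "QK K = (\<Sum>k\<in>{1..K}. smult (1 / real k) (\<Prod>j\<in>{1..K}-{k}. [:real j, 1:]))"
definition PhiK :: "nat \<Rightarrow> real \<Rightarrow> real" where
  "PhiK K s = (\<Sum>k=1..K. s / (real k * (real k + s)))"

lemma poly_PK: "poly (PK K) s = (\<Prod>k=1..K. real k + s)"
  by (simp add: PK_def poly_prod add.commute)

lemma poly_QK: "poly (QK K) s = (\<Sum>k=1..K. (1 / real k) * (\<Prod>j\<in>{1..K}-{k}. real j + s))"
  by (simp add: QK_def poly_sum poly_prod add.commute)

lemma prod_remove_real:
  assumes "k \<in> {1..K}"
  shows "(\<Prod>j=1..K. real j + s) = (real k + s) * (\<Prod>j\<in>{1..K}-{k}. real j + s)"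
  using assms by (simp add: prod.remove)

lemma PhiK_eq:
  assumes "\<forall>k\<in>{1..K}. real k + s \<noteq> 0"
  shows "PhiK K s = s * poly (QK K) s / poly (PK K) s"
proof -
  have P0: "poly (PK K) s \<noteq> 0" using assms by (simp add: poly_PK)
  have "s * poly (QK K) s / poly (PK K) s
      = (\<Sum>k=1..K. s * ((1 / real k) * (\<Prod>j\<in>{1..K}-{k}. real j + s)) / poly (PK K) s)"
    by (simp add: poly_QK sum_distrib_left sum_divide_distrib)
  also have "\<dots> = (\<Sum>k=1..K. s / (real k * (real k + s)))"
  proof (rule sum.cong[OF refl])
    fix k assume k: "k \<in> {1..K}"
    have nz: "real k + s \<noteq> 0" using assms k by auto
    have np: "(\<Prod>j\<in>{1..K}-{k}. real j + s) \<noteq> 0" using assms by auto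
    have kpos: "real k \<noteq> 0" using k by auto
    define pr where "pr = (\<Prod>j\<in>{1..K}-{k}. real j + s)"
    have e: "s * ((1 / real k) * pr) / ((real k + s) * pr) = s / (real k * (real k + s))"
    proof -
      have d: "real k * (real k + s) \<noteq> 0" using nz kpos by simp
      have "s * ((1 / real k) * pr) / ((real k + s) * pr) = ((s / real k) * pr) / ((real k + s) * pr)"
        by simp
      also have "\<dots> = (s / real k) / (real k + s)"
        using np unfolding pr_def[symmetric] by (rule nonzero_mult_divide_mult_cancel_right)
      also have "\<dots> = s / (real k * (real k + s))" by simp
      finally show ?thesis .
    qed
    show "s * ((1 / real k) * (\<Prod>j\<in>{1..K}-{k}. real j + s)) / poly (PK K) s = s / (real k * (real k + s))"
      unfolding poly_PK prod_remove_real[OF k] pr_def[symmetric] by (rule e)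
  qed
  finally show ?thesis by (simp add: PhiK_def)
qed

lemma QK_at_neg:
  assumes k: "k \<in> {1..K}"
  shows "poly (QK K) (- real k) = (1 / real k) * (\<Prod>j\<in>{1..K}-{k}. real j - real k)"
proof -
  have "poly (QK K) (- real k) = (\<Sum>k'\<in>{1..K}. (1 / real k') * (\<Prod>j\<in>{1..K}-{k'}. real j + - real k))"
    by (simp add: poly_QK)
  also have "\<dots> = (1 / real k) * (\<Prod>j\<in>{1..K}-{k}. real j + - real k)"
  proof (rule sum.remove[OF _ k, THEN trans])
    show "finite {1..K}" by simp
    have "(\<Sum>k'\<in>{1..K} - {k}. (1 / real k') * (\<Prod>j\<in>{1..K}-{k'}. real j + - real k)) = 0"
    proof (rule sum.neutral, rule ballI)
      fix k' assume k': "k' \<in> {1..K} - {k}"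
      have "k \<in> {1..K} - {k'}" using k k' by auto
      hence "(\<Prod>j\<in>{1..K}-{k'}. real j + - real k) = 0"
        by (intro prod_zero) auto
      thus "(1 / real k') * (\<Prod>j\<in>{1..K}-{k'}. real j + - real k) = 0" by simp
    qed
    thus "1 / real k * (\<Prod>j\<in>{1..K} - {k}. real j + - real k) +
        (\<Sum>k'\<in>{1..K} - {k}. 1 / real k' * (\<Prod>j\<in>{1..K} - {k'}. real j + - real k)) =
        1 / real k * (\<Prod>j\<in>{1..K} - {k}. real j + - real k)" by simp
  qed
  finally show ?thesis by simp
qed

lemma sign_QK:
  assumes k: "k \<in> {1..K}"
  shows "(-1)^(k-1) * poly (QK K) (- real k) > 0"
proof -
  have split: "{1..K}-{k} = {1..<k} \<union> {k<..K}" using k by auto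
  have disj: "{1..<k} \<inter> {k<..K} = {}" by auto
  have "(\<Prod>j\<in>{1..K}-{k}. real j - real k) = (\<Prod>j\<in>{1..<k}. real j - real k) * (\<Prod>j\<in>{k<..K}. real j - real k)"
    unfolding split by (rule prod.union_disjoint) auto
  moreover have "(\<Prod>j\<in>{1..<k}. real j - real k) = (-1)^(k-1) * (\<Prod>j\<in>{1..<k}. real k - real j)"
  proof -
    have "(\<Prod>j\<in>{1..<k}. real j - real k) = (\<Prod>j\<in>{1..<k}. - (real k - real j))" by simp
    also have "\<dots> = (-1)^card {1..<k} * (\<Prod>j\<in>{1..<k}. real k - real j)" by (rule prod_uminus)
    finally show ?thesis by simp
  qed
  moreover have "(\<Prod>j\<in>{1..<k}. real k - real j) > 0" by (intro prod_pos) auto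
  moreover have "(\<Prod>j\<in>{k<..K}. real j - real k) > 0" by (intro prod_pos) auto
  moreover have "((-1::real)^(k-1)) * (-1)^(k-1) = 1"
    by (simp add: power_mult_distrib[symmetric])
  ultimately have "(-1)^(k-1) * (\<Prod>j\<in>{1..K}-{k}. real j - real k) > 0"
    by (simp add: mult.assoc[symmetric])
  moreover have "real k > 0" using k by auto
  ultimately show ?thesis using QK_at_neg[OF k]
    by (simp add: mult.left_commute)
qed

definition hr :: "nat \<Rightarrow> real" where "hr n = (\<Sum>j=1..n. 1 / real j)"

lemma hr_pos: "n \<ge> 1 \<Longrightarrow> hr n > 0"
  unfolding hr_def by (intro sum_pos) auto

lemma hr_nonneg: "hr n \<ge> 0"
  unfolding hr_def by (intro sum_nonneg) auto

lemma hr_Suc: "hr (Suc n) = hr n + 1 / real (Suc n)"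
  unfolding hr_def by simp

lemma monic_prod:
  fixes c :: "nat \<Rightarrow> real"
  assumes "finite S"
  shows "degree (\<Prod>j\<in>S. [:c j, 1:]) = card S \<and> coeff (\<Prod>j\<in>S. [:c j, 1:]) (card S) = 1"
proof -
  have d: "degree (\<Prod>j\<in>S. [:c j, 1:]) = card S"
  proof -
    have "degree (\<Prod>j\<in>S. [:c j, 1:]) = (\<Sum>j\<in>S. degree [:c j, 1:])"
      by (rule degree_prod_sum_eq) auto
    thus ?thesis by simp
  qed
  have "lead_coeff (\<Prod>j\<in>S. [:c j, 1:]) = 1" by (simp add: lead_coeff_prod)
  with d show ?thesis by simp
qed

lemma degree_QK: "degree (QK K) \<le> K - 1"
  unfolding QK_def
proof (rule degree_sum_le)
  fix k assume k: "k \<in> {1..K}"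
  have "card ({1..K} - {k}) = K - 1" using k by simp
  hence "degree (\<Prod>j\<in>{1..K}-{k}. [:real j, 1:]) = K - 1"
    using monic_prod[of "{1..K}-{k}" real] by simp
  thus "degree (smult (1 / real k) (\<Prod>j\<in>{1..K}-{k}. [:real j, 1:])) \<le> K - 1" by simp
qed simp

lemma coeff_QK: "coeff (QK K) (K - 1) = hr K"
proof -
  have "coeff (QK K) (K - 1) = (\<Sum>k\<in>{1..K}. (1 / real k) * coeff (\<Prod>j\<in>{1..K}-{k}. [:real j, 1:]) (K - 1))"
    by (simp add: QK_def coeff_sum)
  also have "\<dots> = (\<Sum>k\<in>{1..K}. 1 / real k)"
  proof (rule sum.cong[OF refl])
    fix k assume k: "k \<in> {1..K}"
    have "card ({1..K} - {k}) = K - 1" using k by simp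
    hence "coeff (\<Prod>j\<in>{1..K}-{k}. [:real j, 1:]) (K - 1) = 1"
      using monic_prod[of "{1..K}-{k}" real] by simp
    thus "(1 / real k) * coeff (\<Prod>j\<in>{1..K}-{k}. [:real j, 1:]) (K - 1) = 1 / real k" by simp
  qed
  finally show ?thesis by (simp add: hr_def)
qed

lemma degree_PK: "degree (PK K) = K" and coeff_PK: "coeff (PK K) K = 1"
  using monic_prod[of "{1..K}" real] by (simp_all add: PK_def)

definition lam :: "nat \<Rightarrow> nat \<Rightarrow> real" where
  "lam K i = (SOME x. - real (Suc i) < x \<and> x < - real i \<and> poly (QK K) x = 0)"

lemma lam:
  assumes "1 \<le> i" "i < K"
  shows "- real (Suc i) < lam K i \<and> lam K i < - real i \<and> poly (QK K) (lam K i) = 0"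
proof -
  have i1: "i \<in> {1..K}" and i2: "Suc i \<in> {1..K}" using assms by auto
  have u: "(-1)^(i-1) * poly (QK K) (- real i) > 0" by (rule sign_QK[OF i1])
  have v: "(-1)^(Suc i - 1) * poly (QK K) (- real (Suc i)) > 0" by (rule sign_QK[OF i2])
  have pw: "((-1::real)^(Suc i - 1)) = - ((-1)^(i-1))"
    using assms(1) by (cases i) auto
  have sq: "((-1::real)^(i-1)) * (-1)^(i-1) = 1"
    by (simp add: power_mult_distrib[symmetric])
  have "0 < ((-1)^(i-1) * poly (QK K) (- real i)) * ((-1)^(Suc i - 1) * poly (QK K) (- real (Suc i)))"
    using u v by simp
  also have "\<dots> = - (((-1)^(i-1) * (-1)^(i-1)) * (poly (QK K) (- real (Suc i)) * poly (QK K) (- real i)))"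
    unfolding pw by (simp add: algebra_simps)
  also have "\<dots> = - (poly (QK K) (- real (Suc i)) * poly (QK K) (- real i))"
    unfolding sq by simp
  finally have neg: "poly (QK K) (- real (Suc i)) * poly (QK K) (- real i) < 0" by simp
  have "\<exists>x> - real (Suc i). x < - real i \<and> poly (QK K) x = 0"
    by (rule poly_IVT) (use neg in auto)
  then have "\<exists>x. - real (Suc i) < x \<and> x < - real i \<and> poly (QK K) x = 0" by blast
  thus ?thesis unfolding lam_def by (rule someI_ex)
qed

lemma lam_neg: "1 \<le> i \<Longrightarrow> i < K \<Longrightarrow> lam K i < 0"
  using lam[of i K] by auto

lemma lam_ne:
  assumes "1 \<le> i" "i < K"
  shows "real k + lam K i \<noteq> 0"
proof
  assume h: "real k + lam K i = 0"
  from lam[OF assms] have a: "- real (Suc i) < lam K i" "lam K i < - real i" by auto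
  show False
  proof (cases "k \<le> i")
    case True
    then have "real k + lam K i < 0" using a by linarith
    with h show False by simp
  next
    case False
    then have "real k \<ge> real (Suc i)" by simp
    then have "real k + lam K i > 0" using a by linarith
    with h show False by simp
  qed
qed

lemma lam_inj:
  assumes "1 \<le> i" "i < K" "1 \<le> i'" "i' < K" "lam K i = lam K i'"
  shows "i = i'"
proof (rule ccontr)
  assume "i \<noteq> i'"
  then consider "i < i'" | "i' < i" by linarith
  then show False
  proof cases
    case 1
    from lam[OF assms(1,2)] lam[OF assms(3,4)] 1 assms(5) show False
      by (smt (verit, best) of_nat_less_iff Suc_leI of_nat_le_iff)
  next
    case 2
    from lam[OF assms(1,2)] lam[OF assms(3,4)] 2 assms(5) show False
      by (smt (verit, best) of_nat_less_iff Suc_leI of_nat_le_iff)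
  qed
qed

definition Qi :: "nat \<Rightarrow> nat \<Rightarrow> real poly" where
  "Qi K i = synthetic_div (QK K) (lam K i)"

lemma QK_fact:
  assumes "1 \<le> i" "i < K"
  shows "QK K = [:- lam K i, 1:] * Qi K i"
  using synthetic_div_correct'[of "lam K i" "QK K"] lam[OF assms] by (simp add: Qi_def)

lemma poly_Qi:
  assumes "1 \<le> i" "i < K" "s \<noteq> lam K i"
  shows "poly (Qi K i) s = poly (QK K) s / (s - lam K i)"
proof -
  have "poly (QK K) s = (s - lam K i) * poly (Qi K i) s"
    by (subst QK_fact[OF assms(1,2)]) (simp add: algebra_simps)
  with assms(3) show ?thesis by simp
qed

lemma poly_QK_pos: "s \<ge> 0 \<Longrightarrow> K \<ge> 1 \<Longrightarrow> poly (QK K) s > 0"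
  unfolding poly_QK by (intro sum_pos prod_pos mult_pos_pos) auto

lemma poly_PK_pos: "s \<ge> 0 \<Longrightarrow> poly (PK K) s > 0"
  unfolding poly_PK by (intro prod_pos) auto

lemma PhiK_diff:
  assumes "\<forall>k\<in>{1..K}. real k + s \<noteq> 0" "\<forall>k\<in>{1..K}. real k + t \<noteq> 0"
  shows "PhiK K s - PhiK K t = (s - t) * (\<Sum>k=1..K. 1 / ((real k + s) * (real k + t)))"
proof -
  have "PhiK K s - PhiK K t = (\<Sum>k=1..K. s / (real k * (real k + s)) - t / (real k * (real k + t)))"
    by (simp add: PhiK_def sum_subtractf)
  also have "\<dots> = (\<Sum>k=1..K. (s - t) * (1 / ((real k + s) * (real k + t))))"
  proof (rule sum.cong[OF refl])
    fix k assume k: "k \<in> {1..K}"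
    have a: "real k + s \<noteq> 0" "real k + t \<noteq> 0" using assms k by auto
    have b: "real k \<noteq> 0" using k by auto
    show "s / (real k * (real k + s)) - t / (real k * (real k + t)) = (s - t) * (1 / ((real k + s) * (real k + t)))"
      using a b by (simp add: divide_simps) (simp add: algebra_simps)
  qed
  finally show ?thesis by (simp add: sum_distrib_left)
qed

definition Yp :: "nat \<Rightarrow> nat \<Rightarrow> real poly" where
  "Yp K i = (\<Sum>k\<in>{1..K}. smult (1 / (real k + lam K i)) (\<Prod>j\<in>{1..K}-{k}. [:real j, 1:]))"

lemma poly_Yp: "poly (Yp K i) s = (\<Sum>k=1..K. (1 / (real k + lam K i)) * (\<Prod>j\<in>{1..K}-{k}. real j + s))"
  by (simp add: Yp_def poly_sum poly_prod add.commute)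

lemma Qi_Yp:
  assumes "1 \<le> i" "i < K"
  shows "pCons 0 (Qi K i) = Yp K i"
proof -
  let ?l = "lam K i"
  have ln: "\<forall>k\<in>{1..K}. real k + ?l \<noteq> 0" using lam_ne[OF assms] by auto
  have agree: "poly (pCons 0 (Qi K i)) s = poly (Yp K i) s" if s: "s > 0" for s
  proof -
    have sn: "\<forall>k\<in>{1..K}. real k + s \<noteq> 0" using s by auto
    have sl: "s \<noteq> ?l" using s lam_neg[OF assms] by auto
    have Pn: "poly (PK K) s \<noteq> 0" using poly_PK_pos[of s K] s by simp
    have Pl: "poly (PK K) ?l \<noteq> 0" using ln by (simp add: poly_PK)
    have phil: "PhiK K ?l = 0" using PhiK_eq[OF ln] lam[OF assms] by simp
    have "s * poly (QK K) s = PhiK K s * poly (PK K) s"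
      using PhiK_eq[OF sn] Pn by simp
    also have "PhiK K s = (s - ?l) * (\<Sum>k=1..K. 1 / ((real k + s) * (real k + ?l)))"
      using PhiK_diff[OF sn ln] phil by simp
    finally have e1: "s * poly (QK K) s = (s - ?l) * (\<Sum>k=1..K. 1 / ((real k + s) * (real k + ?l))) * poly (PK K) s" .
    have "poly (pCons 0 (Qi K i)) s = s * poly (QK K) s / (s - ?l)"
      using poly_Qi[OF assms sl] by simp
    also have "\<dots> = (\<Sum>k=1..K. 1 / ((real k + s) * (real k + ?l))) * poly (PK K) s"
      unfolding e1 using sl by simp
    also have "\<dots> = (\<Sum>k=1..K. (1 / ((real k + s) * (real k + ?l))) * poly (PK K) s)"
      by (simp add: sum_distrib_right)
    also have "\<dots> = (\<Sum>k=1..K. (1 / (real k + ?l)) * (\<Prod>j\<in>{1..K}-{k}. real j + s))"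
    proof (rule sum.cong[OF refl])
      fix k assume k: "k \<in> {1..K}"
      have a: "real k + s \<noteq> 0" using sn k by auto
      show "(1 / ((real k + s) * (real k + ?l))) * poly (PK K) s = (1 / (real k + ?l)) * (\<Prod>j\<in>{1..K}-{k}. real j + s)"
        unfolding poly_PK prod_remove_real[OF k] using a by simp
    qed
    also have "\<dots> = poly (Yp K i) s" by (simp add: poly_Yp)
    finally show ?thesis .
  qed
  show ?thesis
  proof (rule ccontr)
    assume ne: "pCons 0 (Qi K i) \<noteq> Yp K i"
    hence "pCons 0 (Qi K i) - Yp K i \<noteq> 0" by simp
    hence fin: "finite {x. poly (pCons 0 (Qi K i) - Yp K i) x = 0}" by (rule poly_roots_finite)
    have "{0<..} \<subseteq> {x. poly (pCons 0 (Qi K i) - Yp K i) x = 0}"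
      using agree by auto
    hence "finite {0::real<..}" using fin finite_subset by blast
    thus False using infinite_Ioi by blast
  qed
qed

definition cK :: "nat \<Rightarrow> nat \<Rightarrow> real" where
  "cK K i = 1 / (\<Sum>k=1..K. 1 / (real k + lam K i)^2)"

lemma key_lam:
  assumes "1 \<le> i" "i < K"
  shows "lam K i * poly (Qi K i) (lam K i) = poly (PK K) (lam K i) * (\<Sum>k=1..K. 1 / (real k + lam K i)^2)"
proof -
  let ?l = "lam K i"
  have ln: "\<forall>k\<in>{1..K}. real k + ?l \<noteq> 0" using lam_ne[OF assms] by auto
  have "lam K i * poly (Qi K i) (lam K i) = poly (pCons 0 (Qi K i)) ?l" by simp
  also have "\<dots> = poly (Yp K i) ?l" by (simp add: Qi_Yp[OF assms])
  also have "\<dots> = (\<Sum>k=1..K. (1 / (real k + ?l)) * (\<Prod>j\<in>{1..K}-{k}. real j + ?l))" by (rule poly_Yp)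
  also have "\<dots> = (\<Sum>k=1..K. poly (PK K) ?l * (1 / (real k + ?l)^2))"
  proof (rule sum.cong[OF refl])
    fix k assume k: "k \<in> {1..K}"
    have a: "real k + ?l \<noteq> 0" using ln k by auto
    show "(1 / (real k + ?l)) * (\<Prod>j\<in>{1..K}-{k}. real j + ?l) = poly (PK K) ?l * (1 / (real k + ?l)^2)"
      unfolding poly_PK prod_remove_real[OF k] using a by (simp add: divide_simps power2_eq_square)
  qed
  also have "\<dots> = poly (PK K) ?l * (\<Sum>k=1..K. 1 / (real k + lam K i)^2)"
    by (simp add: sum_distrib_left)
  finally show ?thesis .
qed

lemma cK_bounds:
  assumes "1 \<le> i" "i < K"
  shows "0 < cK K i \<and> cK K i < 1"
proof -
  let ?l = "lam K i"
  have i2: "Suc i \<in> {1..K}" using assms by auto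
  have r: "0 < real (Suc i) + ?l" "real (Suc i) + ?l < 1" using lam[OF assms] by auto
  have t1: "1 / (real (Suc i) + ?l)^2 > 1"
  proof -
    have "(real (Suc i) + ?l)^2 < 1" using r by (simp add: power_less_one_iff abs_less_iff)
    moreover have "(real (Suc i) + ?l)^2 > 0" using r by simp
    ultimately show ?thesis by simp
  qed
  have "(\<Sum>k=1..K. 1 / (real k + ?l)^2) \<ge> 1 / (real (Suc i) + ?l)^2"
    by (rule member_le_sum[OF i2]) auto
  hence "(\<Sum>k=1..K. 1 / (real k + ?l)^2) > 1" using t1 by linarith
  thus ?thesis unfolding cK_def by simp
qed

lemma cK_lam:
  assumes "1 \<le> i" "i < K"
  shows "cK K i * (lam K i * poly (Qi K i) (lam K i)) = poly (PK K) (lam K i)"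
proof -
  have pos: "(\<Sum>k=1..K. 1 / (real k + lam K i)^2) > 0"
    using cK_bounds[OF assms] unfolding cK_def by (simp add: zero_less_divide_iff)
  show ?thesis unfolding key_lam[OF assms] cK_def using pos by simp
qed

definition AK :: "nat \<Rightarrow> real" where "AK K = poly (PK K) 0 / poly (QK K) 0"

definition Rp :: "nat \<Rightarrow> real poly" where
  "Rp K = smult (1 / hr K) (pCons 0 (QK K)) + smult (AK K) (QK K)
          + (\<Sum>i\<in>{1..<K}. smult (cK K i) (pCons 0 (Qi K i)))"

lemma degree_Qi: "degree (Qi K i) \<le> K - 2"
  using degree_QK[of K] by (simp add: Qi_def degree_synthetic_div)

lemma PK_Rp:
  assumes K: "K \<ge> 1"
  shows "PK K = Rp K"
proof (rule poly_eqI_degree_lead_coeff[of _ K _ "insert 0 (lam K ` {1..<K})"])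
  have cQ: "coeff (pCons 0 (QK K)) K = hr K"
    using coeff_QK[of K] K by (cases K) auto
  have cQ2: "coeff (QK K) K = 0"
    using degree_QK[of K] K by (intro coeff_eq_0) auto
  have cQi: "coeff (pCons 0 (Qi K i)) K = 0" for i
  proof -
    have "coeff (Qi K i) (K - 1) = 0"
    proof (cases "K \<ge> 2")
      case True thus ?thesis using degree_Qi[of K i] by (intro coeff_eq_0) auto
    next
      case False
      hence "K = 1" using K by simp
      hence "degree (QK K) = 0" using degree_QK[of K] by simp
      hence "Qi K i = 0" by (simp add: Qi_def synthetic_div_eq_0_iff)
      thus ?thesis by simp
    qed
    thus ?thesis using K by (cases K) auto
  qed
  show "coeff (PK K) K = coeff (Rp K) K"
    using hr_pos[OF K] by (simp add: coeff_PK Rp_def coeff_sum cQ cQ2 cQi del: smult_pCons)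
  show "degree (PK K) \<le> K" by (simp add: degree_PK)
  show "degree (Rp K) \<le> K"
    unfolding Rp_def
  proof (intro degree_add_le degree_sum_le)
    show "degree (smult (1 / hr K) (pCons 0 (QK K))) \<le> K"
      using degree_QK[of K] K degree_pCons_le[of 0 "QK K"] by (auto intro: order_trans[OF degree_smult_le])
    show "degree (smult (AK K) (QK K)) \<le> K"
      using degree_QK[of K] by (auto intro: order_trans[OF degree_smult_le])
    fix i assume "i \<in> {1..<K}"
    show "degree (smult (cK K i) (pCons 0 (Qi K i))) \<le> K"
      using degree_Qi[of K i] K degree_pCons_le[of 0 "Qi K i"] by (auto intro: order_trans[OF degree_smult_le])
  qed simp
  have inj: "inj_on (lam K) {1..<K}"
    by (rule inj_onI) (use lam_inj in auto)
  have n0: "0 \<notin> lam K ` {1..<K}" using lam_neg by fastforce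
  have "card (insert 0 (lam K ` {1..<K})) = Suc (card (lam K ` {1..<K}))"
    using n0 by (simp add: card_insert_disjoint)
  also have "\<dots> = K" using card_image[OF inj] K by simp
  finally show "K \<le> card (insert 0 (lam K ` {1..<K}))" by simp
  fix z assume z: "z \<in> insert 0 (lam K ` {1..<K})"
  show "poly (PK K) z = poly (Rp K) z"
  proof (cases "z = 0")
    case True
    have "poly (QK K) 0 > 0" using poly_QK_pos[OF _ K] by simp
    thus ?thesis using True by (simp add: Rp_def poly_sum AK_def)
  next
    case False
    then obtain i where i: "i \<in> {1..<K}" and zi: "z = lam K i" using z by auto
    have i1: "1 \<le> i" "i < K" using i by auto
    have Qz: "poly (QK K) z = 0" using lam[OF i1] zi by simp
    have others: "(\<Sum>i'\<in>{1..<K} - {i}. cK K i' * (z * poly (Qi K i') z)) = 0"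
    proof (rule sum.neutral, rule ballI)
      fix i' assume i': "i' \<in> {1..<K} - {i}"
      have i'1: "1 \<le> i'" "i' < K" using i' by auto
      have ne: "z \<noteq> lam K i'" using lam_inj[OF i1 i'1] i' zi by auto
      have "poly (Qi K i') z = 0" using poly_Qi[OF i'1 ne] Qz by simp
      thus "cK K i' * (z * poly (Qi K i') z) = 0" by simp
    qed
    have "poly (Rp K) z = (\<Sum>i'\<in>{1..<K}. cK K i' * (z * poly (Qi K i') z))"
      by (simp add: Rp_def poly_sum Qz mult.left_commute)
    also have "\<dots> = cK K i * (z * poly (Qi K i) z) + (\<Sum>i'\<in>{1..<K} - {i}. cK K i' * (z * poly (Qi K i') z))"
      by (rule sum.remove) (use i in auto)
    also have "\<dots> = poly (PK K) z" using others cK_lam[OF i1] zi by simp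
    finally show ?thesis by simp
  qed
qed

lemma partial_fractions:
  assumes K: "K \<ge> 1" and s: "s > 0"
  shows "1 / PhiK K s = 1 / hr K + AK K / s + (\<Sum>i\<in>{1..<K}. cK K i / (s - lam K i))"
proof -
  have sn: "\<forall>k\<in>{1..K}. real k + s \<noteq> 0" using s by auto
  have Qs: "poly (QK K) s > 0" using poly_QK_pos[OF _ K] s by simp
  have Ps: "poly (PK K) s > 0" using poly_PK_pos s by simp
  have sl: "s - lam K i \<noteq> 0" if "i \<in> {1..<K}" for i using lam_neg[of i K] that s by auto
  have "1 / PhiK K s = poly (PK K) s / (s * poly (QK K) s)"
    using PhiK_eq[OF sn] Ps Qs s by simp
  also have "poly (PK K) s = (1 / hr K) * (s * poly (QK K) s) + AK K * poly (QK K) s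
      + (\<Sum>i\<in>{1..<K}. cK K i * (s * poly (Qi K i) s))"
    by (subst PK_Rp[OF K]) (simp add: Rp_def poly_sum mult.left_commute)
  also have "(\<Sum>i\<in>{1..<K}. cK K i * (s * poly (Qi K i) s)) = (\<Sum>i\<in>{1..<K}. cK K i * (s * poly (QK K) s / (s - lam K i)))"
    by (rule sum.cong[OF refl]) (use poly_Qi sl in auto)
  finally have "1 / PhiK K s = ((1 / hr K) * (s * poly (QK K) s) + AK K * poly (QK K) s
      + (\<Sum>i\<in>{1..<K}. cK K i * (s * poly (QK K) s / (s - lam K i)))) / (s * poly (QK K) s)" .
  also have "\<dots> = 1 / hr K + AK K / s + (\<Sum>i\<in>{1..<K}. cK K i * (s * poly (QK K) s / (s - lam K i)) / (s * poly (QK K) s))"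
    using Qs s by (simp add: add_divide_distrib sum_divide_distrib)
  also have "(\<Sum>i\<in>{1..<K}. cK K i * (s * poly (QK K) s / (s - lam K i)) / (s * poly (QK K) s)) = (\<Sum>i\<in>{1..<K}. cK K i / (s - lam K i))"
    by (rule sum.cong[OF refl]) (use Qs s in simp)
  finally show ?thesis .
qed

lemma AK_eq:
  assumes K: "K \<ge> 1"
  shows "AK K = 1 / (\<Sum>k=1..K. 1 / (real k)^2)"
proof -
  have P0: "poly (PK K) 0 > 0" using poly_PK_pos by simp
  have "poly (QK K) 0 = (\<Sum>k=1..K. (1 / real k) * (\<Prod>j\<in>{1..K}-{k}. real j + 0))"
    by (simp add: poly_QK)
  also have "\<dots> = (\<Sum>k=1..K. poly (PK K) 0 * (1 / (real k)^2))"
  proof (rule sum.cong[OF refl])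
    fix k assume k: "k \<in> {1..K}"
    have "real k \<noteq> 0" using k by auto
    thus "(1 / real k) * (\<Prod>j\<in>{1..K}-{k}. real j + 0) = poly (PK K) 0 * (1 / (real k)^2)"
      unfolding poly_PK prod_remove_real[OF k, of 0] by (simp add: divide_simps power2_eq_square)
  qed
  also have "\<dots> = poly (PK K) 0 * (\<Sum>k=1..K. 1 / (real k)^2)" by (simp add: sum_distrib_left)
  finally show ?thesis unfolding AK_def using P0 by simp
qed



definition fd :: "nat \<Rightarrow> (nat \<Rightarrow> real) \<Rightarrow> nat \<Rightarrow> real" where
  "fd N f a = (\<Sum>l=0..N. real (N choose l) * (-1)^l * f (a + l))"

lemma binom_sum_Suc:
  fixes g :: "nat \<Rightarrow> real"
  shows "(\<Sum>l=0..Suc N. real (Suc N choose l) * g l) = (\<Sum>l=0..N. real (N choose l) * g l) + (\<Sum>l=0..N. real (N choose l) * g (Suc l))"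
proof -
  have A: "(\<Sum>l=0..Suc N. real (Suc N choose l) * g l) = g 0 + (\<Sum>l=0..N. real (Suc N choose Suc l) * g (Suc l))"
    by (subst sum.atLeast0_atMost_Suc_shift) simp
  have B: "(\<Sum>l=0..N. real (Suc N choose Suc l) * g (Suc l)) = (\<Sum>l=0..N. real (N choose l) * g (Suc l)) + (\<Sum>l=0..N. real (N choose Suc l) * g (Suc l))"
    by (simp add: sum.distrib[symmetric] algebra_simps)
  have C: "(\<Sum>l=0..N. real (N choose l) * g l) = g 0 + (\<Sum>l=0..N. real (N choose Suc l) * g (Suc l))"
  proof -
    have "(\<Sum>l=0..Suc N. real (N choose l) * g l) = g 0 + (\<Sum>l=0..N. real (N choose Suc l) * g (Suc l))"
      by (subst sum.atLeast0_atMost_Suc_shift) simp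
    moreover have "(\<Sum>l=0..Suc N. real (N choose l) * g l) = (\<Sum>l=0..N. real (N choose l) * g l)"
      by simp
    ultimately show ?thesis by simp
  qed
  show ?thesis using A B C by simp
qed

lemma fd_Suc: "fd (Suc N) f a = fd N f a - fd N f (Suc a)"
proof -
  have "fd (Suc N) f a = (\<Sum>l=0..N. real (N choose l) * ((-1)^l * f (a + l))) + (\<Sum>l=0..N. real (N choose l) * ((-1)^(Suc l) * f (a + Suc l)))"
    unfolding fd_def using binom_sum_Suc[of N "\<lambda>l. (-1)^l * f (a + l)"] by (simp add: mult.assoc)
  also have "(\<Sum>l=0..N. real (N choose l) * ((-1)^(Suc l) * f (a + Suc l))) = - fd N f (Suc a)"
    unfolding fd_def by (simp add: sum_negf[symmetric] mult.assoc)
  finally show ?thesis by (simp add: fd_def mult.assoc)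
qed

lemma fd_0: "fd 0 f a = f a" by (simp add: fd_def)

lemma fd_const_indep: "fd N (\<lambda>_. c) a = fd N (\<lambda>_. c) b"
  by (simp add: fd_def)

lemma fd_const: "N \<ge> 1 \<Longrightarrow> fd N (\<lambda>_. c) a = 0"
proof (cases N)
  case (Suc M)
  have "fd M (\<lambda>_. c) a = fd M (\<lambda>_. c) (Suc a)" by (rule fd_const_indep)
  thus ?thesis using Suc by (simp add: fd_Suc)
qed simp

lemma fd_add: "fd N (\<lambda>j. f j + g j) a = fd N f a + fd N g a"
  by (simp add: fd_def algebra_simps sum.distrib)

lemma fd_diff: "fd N (\<lambda>j. f j - g j) a = fd N f a - fd N g a"
  by (simp add: fd_def algebra_simps sum_subtractf)

lemma fd_scale: "fd N (\<lambda>j. c * f j) a = c * fd N f a"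
  by (simp add: fd_def sum_distrib_left algebra_simps)

lemma fd_sum: "fd N (\<lambda>j. \<Sum>i\<in>S. f i j) a = (\<Sum>i\<in>S. fd N (f i) a)"
  unfolding fd_def sum_distrib_left by (rule sum.swap)

definition Bq :: "real \<Rightarrow> nat \<Rightarrow> real" where
  "Bq z N = fact N / (\<Prod>l=0..N. z + real l)"

lemma Bq_step:
  assumes "z > 0"
  shows "Bq z N - Bq (z + 1) N = Bq z (Suc N)"
proof -
  have p1: "(\<Prod>l=0..Suc N. z + real l) = (\<Prod>l=0..N. z + real l) * (z + real (Suc N))"
    by (simp add: prod.atLeast0_atMost_Suc)
  have p2: "(\<Prod>l=0..Suc N. z + real l) = z * (\<Prod>l=0..N. z + 1 + real l)"
    by (subst prod.atLeast0_atMost_Suc_shift) (simp add: add.assoc)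
  have a: "(\<Prod>l=0..N. z + real l) > 0" using assms by (intro prod_pos) auto
  have b: "(\<Prod>l=0..N. z + 1 + real l) > 0" using assms by (intro prod_pos) auto
  define A where "A = (\<Prod>l=0..N. z + real l)"
  define B where "B = (\<Prod>l=0..N. z + 1 + real l)"
  have AB: "A * (z + real (Suc N)) = z * B" using p1 p2 unfolding A_def B_def by simp
  have "Bq z N - Bq (z + 1) N = fact N / A - fact N / B" unfolding Bq_def A_def B_def by simp
  also have "\<dots> = fact N * (B - A) / (A * B)" using a b unfolding A_def[symmetric] B_def[symmetric]
    by (simp add: divide_simps) (simp add: algebra_simps)
  also have "\<dots> = fact (Suc N) / (z * B)"
  proof -
    have "B - A = (real (Suc N)) * A / z"
      using AB assms by (simp add: divide_simps algebra_simps)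
    hence "fact N * (B - A) / (A * B) = fact N * real (Suc N) / (z * B)"
      using a b assms unfolding A_def[symmetric] B_def[symmetric] by (simp add: divide_simps)
    thus ?thesis by (simp add: algebra_simps)
  qed
  also have "\<dots> = Bq z (Suc N)" unfolding Bq_def p2 B_def by simp
  finally show ?thesis .
qed

lemma fd_inv:
  assumes "real a + t > 0"
  shows "fd N (\<lambda>j. 1 / (real j + t)) a = Bq (real a + t) N"
  using assms
proof (induction N arbitrary: a)
  case 0
  then show ?case by (simp add: fd_0 Bq_def)
next
  case (Suc N)
  have h1: "real (Suc a) + t > 0" using Suc.prems by simp
  have "fd (Suc N) (\<lambda>j. 1 / (real j + t)) a = Bq (real a + t) N - Bq (real (Suc a) + t) N"
    by (simp add: fd_Suc Suc.IH[OF Suc.prems] Suc.IH[OF h1])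
  also have "\<dots> = Bq (real a + t) (Suc N)"
    using Bq_step[of "real a + t" N] Suc.prems by (simp add: add_ac)
  finally show ?case .
qed

lemma Bq_pos: "z > 0 \<Longrightarrow> Bq z N > 0"
  unfolding Bq_def by (intro divide_pos_pos prod_pos) auto

lemma Bq_mono:
  assumes "0 < z" "z \<le> w"
  shows "Bq w N \<le> Bq z N"
  unfolding Bq_def
proof (rule divide_left_mono)
  show "(\<Prod>l=0..N. z + real l) \<le> (\<Prod>l=0..N. w + real l)"
    by (rule prod_mono) (use assms in auto)
  show "0 \<le> (fact N :: real)" by (rule fact_ge_zero)
  show "0 < (\<Prod>l=0..N. w + real l) * (\<Prod>l=0..N. z + real l)"
    using assms by (intro mult_pos_pos prod_pos) auto
qed

definition tau :: "real \<Rightarrow> nat \<Rightarrow> real" where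
  "tau z N = fact N / (\<Prod>l=0..N. z + real l)"

lemma Bq_tele:
  assumes "z > 0"
  shows "Bq z (Suc N) = real (Suc N) * (Bq z N - Bq (z + 1) N) / real (Suc N)"
  using Bq_step[OF assms] by simp

lemma Bq_sum_tele:
  assumes "z > 0"
  shows "(\<Sum>i=1..M. Bq (z + real i) (Suc N)) = Bq (z + 1) N - Bq (z + real M + 1) N"
proof (induction M)
  case 0 then show ?case by simp
next
  case (Suc M)
  have "Bq (z + real (Suc M)) (Suc N) = Bq (z + real (Suc M)) N - Bq (z + real (Suc M) + 1) N"
    using Bq_step[of "z + real (Suc M)" N] assms by simp
  then show ?case using Suc.IH by (simp add: add_ac)
qed

lemma Bq_sum_bound:
  assumes "z > 0"
  shows "(\<Sum>i=1..M. Bq (z + real i) (Suc N)) \<le> Bq (z + 1) N"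
  using Bq_sum_tele[OF assms, where M=M and N=N] Bq_pos[of "z + real M + 1" N] assms by simp



lemma fd_cong:
  assumes "\<And>l. l \<le> N \<Longrightarrow> f (a + l) = g (a + l)"
  shows "fd N f a = fd N g a"
  unfolding fd_def by (rule sum.cong) (use assms in auto)

lemma TK_bound:
  assumes K: "K \<ge> 1" and N: "N \<ge> 1" and a: "a \<ge> 1"
  shows "0 \<le> fd N (\<lambda>j. 1 / PhiK K (real j) - AK K / real j) a \<and>
         fd N (\<lambda>j. 1 / PhiK K (real j) - AK K / real j) a \<le> Bq (real a + 1) (N - 1)"
proof -
  have "fd N (\<lambda>j. 1 / PhiK K (real j) - AK K / real j) a
      = fd N (\<lambda>j. 1 / hr K + (\<Sum>i\<in>{1..<K}. cK K i * (1 / (real j + - lam K i)))) a"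
  proof (rule fd_cong)
    fix l assume "l \<le> N"
    have "real (a + l) > 0" using a by simp
    from partial_fractions[OF K this]
    show "1 / PhiK K (real (a + l)) - AK K / real (a + l) =
          1 / hr K + (\<Sum>i\<in>{1..<K}. cK K i * (1 / (real (a + l) + - lam K i)))"
      by simp
  qed
  also have "\<dots> = (\<Sum>i\<in>{1..<K}. cK K i * Bq (real a - lam K i) N)"
  proof -
    have "fd N (\<lambda>j. 1 / hr K + (\<Sum>i\<in>{1..<K}. cK K i * (1 / (real j + - lam K i)))) a
        = fd N (\<lambda>_. 1 / hr K) a + (\<Sum>i\<in>{1..<K}. cK K i * fd N (\<lambda>j. 1 / (real j + - lam K i)) a)"
      by (simp only: fd_add fd_sum fd_scale)
    also have "\<dots> = (\<Sum>i\<in>{1..<K}. cK K i * Bq (real a - lam K i) N)"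
    proof -
      have "\<And>i. i \<in> {1..<K} \<Longrightarrow> fd N (\<lambda>j. 1 / (real j + - lam K i)) a = Bq (real a - lam K i) N"
      proof -
        fix i assume i: "i \<in> {1..<K}"
        have "real a + - lam K i > 0" using lam_neg[of i K] i a by auto
        thus "fd N (\<lambda>j. 1 / (real j + - lam K i)) a = Bq (real a - lam K i) N"
          using fd_inv[of a "- lam K i" N] by simp
      qed
      thus ?thesis using fd_const[OF N] by simp
    qed
    finally show ?thesis .
  qed
  finally have eq: "fd N (\<lambda>j. 1 / PhiK K (real j) - AK K / real j) a = (\<Sum>i\<in>{1..<K}. cK K i * Bq (real a - lam K i) N)" .
  have lo: "0 \<le> (\<Sum>i\<in>{1..<K}. cK K i * Bq (real a - lam K i) N)"
  proof (rule sum_nonneg)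
    fix i assume i: "i \<in> {1..<K}"
    have "real a - lam K i > 0" using lam_neg[of i K] i a by auto
    thus "0 \<le> cK K i * Bq (real a - lam K i) N"
      using cK_bounds[of i K] i Bq_pos by (auto intro!: mult_nonneg_nonneg less_imp_le)
  qed
  have "(\<Sum>i\<in>{1..<K}. cK K i * Bq (real a - lam K i) N) \<le> (\<Sum>i\<in>{1..<K}. Bq (real a + real i) N)"
  proof (rule sum_mono)
    fix i assume i: "i \<in> {1..<K}"
    have i1: "1 \<le> i" "i < K" using i by auto
    have "real a + real i < real a - lam K i" using lam[OF i1] by auto
    hence b1: "Bq (real a - lam K i) N \<le> Bq (real a + real i) N"
      using a by (intro Bq_mono) auto
    have b0: "Bq (real a - lam K i) N > 0" using lam_neg[OF i1] a by (intro Bq_pos) auto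
    have "cK K i * Bq (real a - lam K i) N \<le> 1 * Bq (real a - lam K i) N"
      using cK_bounds[OF i1] b0 by (intro mult_right_mono) auto
    thus "cK K i * Bq (real a - lam K i) N \<le> Bq (real a + real i) N" using b1 by simp
  qed
  also have "\<dots> = (\<Sum>i=1..K-1. Bq (real a + real i) (Suc (N - 1)))"
    using N K by (intro sum.cong) auto
  also have "\<dots> \<le> Bq (real a + 1) (N - 1)"
    using Bq_sum_bound[of "real a", where M="K - 1" and N="N - 1"] a by simp
  finally show ?thesis using eq lo by simp
qed



definition tl_sum :: "nat \<Rightarrow> nat \<Rightarrow> real" where
  "tl_sum K j = (\<Sum>i=1..j. 1 / (real K + real i))"

lemma sum_shift1: "(\<Sum>i=1..j. f (Suc i)) = (\<Sum>i=1..j. f i) - f 1 + (f (Suc j) :: real)"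
  by (induction j) simp_all

lemma PhiK_nat: "PhiK K (real j) = hr j - tl_sum K j"
proof (induction K)
  case 0
  then show ?case by (simp add: PhiK_def tl_sum_def hr_def)
next
  case (Suc K)
  have t: "tl_sum (Suc K) j = tl_sum K j - 1 / (real K + 1) + 1 / (real K + real (Suc j))"
    unfolding tl_sum_def using sum_shift1[of "\<lambda>i. 1 / (real K + real i)" j] by (simp add: add_ac)
  have e: "real j / (real (Suc K) * (real (Suc K) + real j)) = 1 / (real K + 1) - 1 / (real K + real (Suc j))"
    by (simp add: divide_simps) (simp add: algebra_simps)
  have "PhiK (Suc K) (real j) = PhiK K (real j) + real j / (real (Suc K) * (real (Suc K) + real j))"
    by (simp add: PhiK_def)
  then show ?case using Suc.IH t e by simp
qed

lemma tl_sum_lim: "(\<lambda>K. tl_sum K j) \<longlonglongrightarrow> 0"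
proof (rule real_tendsto_sandwich[where f = "\<lambda>_. 0" and h = "\<lambda>K. real j * inverse (real (Suc K))"])
  show "\<forall>\<^sub>F K in sequentially. 0 \<le> tl_sum K j"
    unfolding tl_sum_def by (intro always_eventually allI sum_nonneg) auto
  show "\<forall>\<^sub>F K in sequentially. tl_sum K j \<le> real j * inverse (real (Suc K))"
  proof (intro always_eventually allI)
    fix K
    have "tl_sum K j \<le> (\<Sum>i=1..j. inverse (real (Suc K)))"
      unfolding tl_sum_def by (intro sum_mono) (auto simp: divide_simps)
    thus "tl_sum K j \<le> real j * inverse (real (Suc K))" by simp
  qed
  show "(\<lambda>K. real j * inverse (real (Suc K))) \<longlonglongrightarrow> 0"
    using tendsto_mult_right_zero[OF LIMSEQ_inverse_real_of_nat, of "real j"] by simp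
qed simp

lemma PhiK_lim: "(\<lambda>K. PhiK K (real j)) \<longlonglongrightarrow> hr j"
  unfolding PhiK_nat using tendsto_diff[OF tendsto_const tl_sum_lim, of "hr j" j] by simp

definition Zs :: real where "Zs = suminf (\<lambda>n. inverse (real n ^ 2))"
definition Alim :: real where "Alim = 1 / Zs"

lemma AK_lim: "AK \<longlonglongrightarrow> Alim"
proof -
  have sm: "summable (\<lambda>n. inverse (real n ^ 2))" by (rule inverse_power_summable) simp
  have L: "(\<lambda>K. \<Sum>n<Suc K. inverse (real n ^ 2)) \<longlonglongrightarrow> Zs"
    using summable_LIMSEQ[OF sm] unfolding Zs_def by (rule LIMSEQ_Suc)
  have eqs: "(\<Sum>n<Suc K. inverse (real n ^ 2)) = (\<Sum>k=1..K. 1 / (real k)^2)" for K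
  proof -
    have "{..<Suc K} = insert 0 {1..K}" by auto
    thus ?thesis by (simp add: divide_inverse)
  qed
  have Zpos: "Zs \<ge> 1"
  proof -
    have "(\<Sum>n<Suc 1. inverse (real n ^ 2)) \<le> Zs"
      unfolding Zs_def by (rule sum_le_suminf[OF sm]) auto
    thus ?thesis by simp
  qed
  have "(\<lambda>K. 1 / (\<Sum>n<Suc K. inverse (real n ^ 2))) \<longlonglongrightarrow> 1 / Zs"
    by (rule tendsto_divide[OF tendsto_const L]) (use Zpos in auto)
  then show ?thesis
    unfolding Alim_def
  proof (rule Lim_transform_eventually)
    show "\<forall>\<^sub>F K in sequentially. 1 / (\<Sum>n<Suc K. inverse (real n ^ 2)) = AK K"
      using eventually_ge_at_top[of "1::nat"]
      by eventually_elim (metis eqs AK_eq)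
  qed
qed

lemma T_bound:
  assumes N: "N \<ge> 1" and a: "a \<ge> 1"
  shows "0 \<le> fd N (\<lambda>j. 1 / hr j - Alim / real j) a \<and>
         fd N (\<lambda>j. 1 / hr j - Alim / real j) a \<le> Bq (real a + 1) (N - 1)"
proof -
  have conv: "(\<lambda>K. fd N (\<lambda>j. 1 / PhiK K (real j) - AK K / real j) a) \<longlonglongrightarrow> fd N (\<lambda>j. 1 / hr j - Alim / real j) a"
  proof -
    have t: "(\<lambda>K. 1 / PhiK K (real (a + l))) \<longlonglongrightarrow> 1 / hr (a + l)" for l
    proof -
      have "hr (a + l) > 0" using a by (intro hr_pos) simp
      thus ?thesis by (intro tendsto_intros PhiK_lim) auto
    qed
    show ?thesis unfolding fd_def
      by (intro tendsto_intros PhiK_lim AK_lim) (use a hr_pos in \<open>auto simp: less_imp_neq[symmetric]\<close>)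
  qed
  have ev: "\<forall>\<^sub>F K in sequentially. K \<ge> 1" by (rule eventually_ge_at_top)
  have lo: "0 \<le> fd N (\<lambda>j. 1 / hr j - Alim / real j) a"
    by (rule tendsto_lowerbound[OF conv]) (use ev in \<open>eventually_elim\<close>, use TK_bound[OF _ N a] in auto)
  have up: "fd N (\<lambda>j. 1 / hr j - Alim / real j) a \<le> Bq (real a + 1) (N - 1)"
    by (rule tendsto_upperbound[OF conv]) (use ev in \<open>eventually_elim\<close>, use TK_bound[OF _ N a] in auto)
  show ?thesis using lo up by simp
qed



lemma alt_tele:
  fixes u :: "nat \<Rightarrow> real"
  shows "(\<Sum>r=1..m. (-1)^(r+1) * (u (r - 1) + u r)) = u 0 + (-1)^(m+1) * u m"
  by (induction m) (simp_all add: algebra_simps)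

lemma alt_binom:
  assumes "m \<ge> 1"
  shows "(\<Sum>r=1..m. (-1)^(r+1) * real (a + m choose (a + r))) = real (a + m - 1 choose a)"
proof -
  let ?u = "\<lambda>r. real (a + m - 1 choose (a + r))"
  have "(\<Sum>r=1..m. (-1)^(r+1) * real (a + m choose (a + r))) = (\<Sum>r=1..m. (-1)^(r+1) * (?u (r - 1) + ?u r))"
  proof (rule sum.cong[OF refl])
    fix r assume r: "r \<in> {1..m}"
    have "a + m = Suc (a + m - 1)" "a + r = Suc (a + (r - 1))" using assms r by auto
    hence "a + m choose (a + r) = (a + m - 1 choose (a + (r - 1))) + (a + m - 1 choose (a + r))"
      by (metis binomial_Suc_Suc add_Suc_right)
    thus "(-1)^(r+1) * real (a + m choose (a + r)) = (-1)^(r+1) * (?u (r - 1) + ?u r)" by simp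
  qed
  also have "\<dots> = ?u 0 + (-1)^(m+1) * ?u m" by (rule alt_tele)
  also have "?u m = 0" using assms by simp
  finally show ?thesis by simp
qed

definition Ssum :: "nat \<Rightarrow> nat \<Rightarrow> real" where
  "Ssum a j = (\<Sum>r=1..j. (-1)^(r+1) * real (a + j choose (a + r)) / real r)"

lemma Ssum_rec: "real (Suc j) * Ssum a (Suc j) = real (a + Suc j) * Ssum a j + real (a + j choose a)"
proof -
  have tm: "real (Suc j) * ((-1)^(r+1) * real (a + Suc j choose (a + r)) / real r)
      = real (a + Suc j) * ((-1)^(r+1) * real (a + j choose (a + r)) / real r) + (-1)^(r+1) * real (a + Suc j choose (a + r))"
    if r: "r \<in> {1..Suc j}" for r
  proof -
    have nat: "(Suc j - r) * (a + Suc j choose (a + r)) = (a + Suc j) * (a + j choose (a + r))"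
      using binomial_absorb_comp[of "a + Suc j" "a + r"] r by simp
    have rn: "real r \<noteq> 0" using r by auto
    have "real (Suc j) * real (a + Suc j choose (a + r)) = real (Suc j - r) * real (a + Suc j choose (a + r)) + real r * real (a + Suc j choose (a + r))"
      using r by (simp add: of_nat_diff algebra_simps)
    also have "\<dots> = real (a + Suc j) * real (a + j choose (a + r)) + real r * real (a + Suc j choose (a + r))"
      using nat by (metis of_nat_mult)
    finally have e: "real (Suc j) * real (a + Suc j choose (a + r)) = real (a + Suc j) * real (a + j choose (a + r)) + real r * real (a + Suc j choose (a + r))" .
    have gen: "\<And>J C1 A C0 (r::real) (sg::real). r \<noteq> 0 \<Longrightarrow> J * C1 = A * C0 + r * C1 \<Longrightarrow>
        J * (sg * C1 / r) = A * (sg * C0 / r) + sg * C1"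
    proof -
      fix J C1 A C0 r sg :: real assume a1: "r \<noteq> 0" and a2: "J * C1 = A * C0 + r * C1"
      have "J * (sg * C1 / r) = sg * (J * C1) / r" by simp
      also have "\<dots> = sg * (A * C0 + r * C1) / r" by (simp add: a2)
      also have "\<dots> = A * (sg * C0 / r) + sg * C1" using a1 by (simp add: divide_simps) (simp add: algebra_simps)
      finally show "J * (sg * C1 / r) = A * (sg * C0 / r) + sg * C1" .
    qed
    show ?thesis by (rule gen[OF rn e])
  qed
  have "real (Suc j) * Ssum a (Suc j) = (\<Sum>r=1..Suc j. real (Suc j) * ((-1)^(r+1) * real (a + Suc j choose (a + r)) / real r))"
    unfolding Ssum_def by (rule sum_distrib_left)
  also have "\<dots> = (\<Sum>r=1..Suc j. real (a + Suc j) * ((-1)^(r+1) * real (a + j choose (a + r)) / real r))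
        + (\<Sum>r=1..Suc j. (-1)^(r+1) * real (a + Suc j choose (a + r)))"
    unfolding sum.distrib[symmetric] by (rule sum.cong[OF refl], rule tm)
  also have "(\<Sum>r=1..Suc j. real (a + Suc j) * ((-1)^(r+1) * real (a + j choose (a + r)) / real r)) = real (a + Suc j) * Ssum a j"
    by (simp add: Ssum_def sum_distrib_left)
  also have "(\<Sum>r=1..Suc j. (-1)^(r+1) * real (a + Suc j choose (a + r))) = real (a + j choose a)"
    using alt_binom[of "Suc j" a] by simp
  finally show ?thesis .
qed

lemma Ssum_eq: "Ssum a j = real (a + j choose a) * (hr (a + j) - hr a)"
proof (induction j)
  case 0
  then show ?case by (simp add: Ssum_def)
next
  case (Suc j)
  have c: "real (Suc j) * real (a + Suc j choose a) = real (a + Suc j) * real (a + j choose a)"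
  proof -
    have "(a + Suc j - a) * (a + Suc j choose a) = (a + Suc j) * (a + Suc j - 1 choose a)"
      by (rule binomial_absorb_comp)
    hence "Suc j * (a + Suc j choose a) = (a + Suc j) * (a + j choose a)" by simp
    thus ?thesis by (metis of_nat_mult)
  qed
  have h: "hr (a + Suc j) = hr (a + j) + 1 / real (a + Suc j)"
    using hr_Suc[of "a + j"] by simp
  have pos: "real (a + Suc j) > 0" by simp
  have gen: "\<And>J C1 A C0 S1 S0 H1 H0 ha :: real. J \<noteq> 0 \<Longrightarrow> A \<noteq> 0 \<Longrightarrow> J * C1 = A * C0 \<Longrightarrow>
      J * S1 = A * S0 + C0 \<Longrightarrow> S0 = C0 * (H0 - ha) \<Longrightarrow> H1 = H0 + 1 / A \<Longrightarrow> S1 = C1 * (H1 - ha)"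
  proof -
    fix J C1 A C0 S1 S0 H1 H0 ha :: real
    assume J: "J \<noteq> 0" and A: "A \<noteq> 0" and e1: "J * C1 = A * C0" and e2: "J * S1 = A * S0 + C0"
      and e3: "S0 = C0 * (H0 - ha)" and e4: "H1 = H0 + 1 / A"
    have "J * S1 = J * (C1 * (H1 - ha))"
    proof -
      have "J * (C1 * (H1 - ha)) = (J * C1) * (H1 - ha)" by simp
      also have "\<dots> = A * C0 * (H0 - ha) + A * C0 * (1 / A)" unfolding e1 e4 by (simp add: algebra_simps)
      also have "\<dots> = A * S0 + C0" using A e3 by simp
      finally show ?thesis using e2 by simp
    qed
    thus "S1 = C1 * (H1 - ha)" using J by simp
  qed
  have "Ssum a (Suc j) = real (a + Suc j choose a) * (hr (a + Suc j) - hr a)"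
    by (rule gen[OF _ _ c Ssum_rec Suc.IH h]) auto
  thus ?case by simp
qed

lemma tri_swap:
  fixes g :: "nat \<Rightarrow> nat \<Rightarrow> real"
  shows "(\<Sum>b=p..M. \<Sum>c=b..M. g b c) = (\<Sum>c=p..M. \<Sum>b=p..c. g b c)"
proof -
  have "(\<Sum>b=p..M. \<Sum>c=b..M. g b c) = (\<Sum>b\<in>{p..M}. \<Sum>c\<in>{c\<in>{p..M}. b \<le> c}. g b c)"
    by (rule sum.cong[OF refl], rule sum.cong) auto
  also have "\<dots> = (\<Sum>c\<in>{p..M}. \<Sum>b | b \<in> {p..M} \<and> b \<le> c. g b c)"
    by (rule sum.swap_restrict) auto
  also have "\<dots> = (\<Sum>c=p..M. \<Sum>b=p..c. g b c)"
    by (rule sum.cong[OF refl], rule sum.cong) auto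
  finally show ?thesis .
qed

definition phi :: "nat \<Rightarrow> real" where "phi j = 1 / hr j"

definition V :: "(nat \<Rightarrow> real) \<Rightarrow> nat \<Rightarrow> nat \<Rightarrow> real" where
  "V f M b = real (M choose b) * fd (M - b) f b"

lemma V_expand:
  assumes "b \<le> M"
  shows "V f M b = (\<Sum>c=b..M. real (M choose c) * real (c choose b) * (-1)^(c - b) * f c)"
proof -
  have "V f M b = (\<Sum>l=0..M-b. real (M choose (l + b)) * real ((l + b) choose b) * (-1)^l * f (l + b))"
    unfolding V_def fd_def sum_distrib_left
  proof (rule sum.cong[OF refl])
    fix l assume l: "l \<in> {0..M-b}"
    have "(M choose (l + b)) * ((l + b) choose b) = (M choose b) * ((M - b) choose (l + b - b))"
      by (rule choose_mult) (use l assms in auto)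
    hence e: "real (M choose (l + b)) * real ((l + b) choose b) = real (M choose b) * real ((M - b) choose l)"
      by (metis of_nat_mult add_diff_cancel_right')
    show "real (M choose b) * (real (M - b choose l) * (- 1) ^ l * f (b + l)) =
          real (M choose (l + b)) * real (l + b choose b) * (- 1) ^ l * f (l + b)"
      using e by (simp add: add.commute)
  qed
  also have "\<dots> = (\<Sum>c=0+b..(M-b)+b. real (M choose c) * real (c choose b) * (-1)^(c - b) * f c)"
    by (subst sum.shift_bounds_cl_nat_ivl) simp
  also have "\<dots> = (\<Sum>c=b..M. real (M choose c) * real (c choose b) * (-1)^(c - b) * f c)"
    using assms by simp
  finally show ?thesis .
qed

lemma V_const0:
  assumes "a < M"
  shows "(\<Sum>c=a..M. real (M choose c) * real (c choose a) * (-1)^(c - a)) = 0"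
proof -
  have "(\<Sum>c=a..M. real (M choose c) * real (c choose a) * (-1)^(c - a)) = V (\<lambda>_. 1) M a"
    using V_expand[of a M "\<lambda>_. 1"] assms by simp
  also have "\<dots> = 0" unfolding V_def using fd_const[of "M - a" 1 a] assms by simp
  finally show ?thesis .
qed

lemma coef:
  assumes "a < c"
  shows "(\<Sum>b=a+1..c. real (c choose b) * (-1)^(c - b) / real (b - a)) = - ((-1)^(c - a) * real (c choose a) * (hr c - hr a))"
proof -
  let ?j = "c - a"
  have cj: "c = a + ?j" using assms by simp
  have "(\<Sum>b=a+1..c. real (c choose b) * (-1)^(c - b) / real (b - a))
      = (\<Sum>r=1..?j. real (c choose (r + a)) * (-1)^(c - (r + a)) / real r)"
  proof -
    have "(\<Sum>b=1+a..?j+a. real (c choose b) * (-1)^(c - b) / real (b - a)) = (\<Sum>r=1..?j. real (c choose (r + a)) * (-1)^(c - (r + a)) / real (r + a - a))"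
      by (rule sum.shift_bounds_cl_nat_ivl)
    thus ?thesis using cj by (simp add: add.commute)
  qed
  also have "\<dots> = (\<Sum>r=1..?j. - ((-1)^?j * ((-1)^(r+1) * real (a + ?j choose (a + r)) / real r)))"
  proof (rule sum.cong[OF refl])
    fix r assume r: "r \<in> {1..?j}"
    have p: "((-1::real)^(c - (r + a))) = - ((-1)^?j * (-1)^(r+1))"
    proof -
      have "?j = (c - (r + a)) + r" using r by auto
      hence "((-1::real)^?j) = (-1)^(c - (r + a)) * (-1)^r" by (simp add: power_add)
      hence "((-1::real)^?j) * (-1)^r = (-1)^(c - (r + a)) * ((-1)^r * (-1)^r)" by simp
      also have "((-1::real)^r * (-1)^r) = 1" by (simp add: power_mult_distrib[symmetric])
      finally show ?thesis by simp
    qed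
    show "real (c choose (r + a)) * (-1)^(c - (r + a)) / real r = - ((-1)^?j * ((-1)^(r+1) * real (a + ?j choose (a + r)) / real r))"
      unfolding p using cj by (simp add: add.commute)
  qed
  also have "\<dots> = - ((-1)^?j * Ssum a ?j)"
    by (simp add: Ssum_def sum_negf sum_distrib_left)
  also have "\<dots> = - ((-1)^(c - a) * real (c choose a) * (hr c - hr a))"
    using cj by (simp add: Ssum_eq)
  finally show ?thesis .
qed

lemma V_rec:
  assumes a: "1 \<le> a" and aM: "a < M"
  shows "hr a * V phi M a = (\<Sum>b=a+1..M. V phi M b / real (b - a))"
proof -
  define w where "w c = real (M choose c) * real (c choose a) * (-1)^(c - a)" for c
  have hp: "hr c > 0" if "c \<ge> a" for c using that a hr_pos by simp
  have "(\<Sum>b=a+1..M. V phi M b / real (b - a))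
      = (\<Sum>b=a+1..M. \<Sum>c=b..M. real (M choose c) * real (c choose b) * (-1)^(c - b) * phi c / real (b - a))"
    by (rule sum.cong[OF refl]) (simp add: V_expand sum_divide_distrib)
  also have "\<dots> = (\<Sum>c=a+1..M. \<Sum>b=a+1..c. real (M choose c) * real (c choose b) * (-1)^(c - b) * phi c / real (b - a))"
    by (rule tri_swap)
  also have "\<dots> = (\<Sum>c=a+1..M. real (M choose c) * phi c * (\<Sum>b=a+1..c. real (c choose b) * (-1)^(c - b) / real (b - a)))"
    by (rule sum.cong[OF refl]) (simp add: sum_distrib_left algebra_simps)
  also have "\<dots> = (\<Sum>c=a+1..M. - (w c * (hr c - hr a) * phi c))"
  proof (rule sum.cong[OF refl])
    fix c assume "c \<in> {a+1..M}"
    hence "a < c" by auto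
    from coef[OF this] show "real (M choose c) * phi c * (\<Sum>b=a+1..c. real (c choose b) * (-1)^(c - b) / real (b - a)) = - (w c * (hr c - hr a) * phi c)"
      unfolding w_def by (simp only:) (simp add: algebra_simps)
  qed
  also have "\<dots> = (\<Sum>c=a..M. - (w c * (hr c - hr a) * phi c))"
  proof -
    have "{a..M} = insert a {a+1..M}" using aM by auto
    thus ?thesis by simp
  qed
  finally have R: "(\<Sum>b=a+1..M. V phi M b / real (b - a)) = (\<Sum>c=a..M. - (w c * (hr c - hr a) * phi c))" .
  have "hr a * V phi M a = (\<Sum>c=a..M. w c * (hr a * phi c))"
    unfolding V_expand[OF less_imp_le[OF aM]] w_def sum_distrib_left by (simp add: algebra_simps)
  also have "\<dots> = (\<Sum>c=a..M. w c - w c * (hr c - hr a) * phi c)"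
  proof (rule sum.cong[OF refl])
    fix c assume "c \<in> {a..M}"
    hence "hr c > 0" using hp by auto
    thus "w c * (hr a * phi c) = w c - w c * (hr c - hr a) * phi c"
      by (simp add: phi_def divide_simps) (simp add: algebra_simps)
  qed
  also have "\<dots> = (\<Sum>c=a..M. w c) + (\<Sum>c=a..M. - (w c * (hr c - hr a) * phi c))"
    by (simp add: sum.distrib[symmetric])
  also have "(\<Sum>c=a..M. w c) = 0" unfolding w_def by (rule V_const0[OF aM])
  finally show ?thesis using R by simp
qed



function Gr :: "nat \<Rightarrow> nat \<Rightarrow> real" where
  "Gr n m = (if n < m then 0 else if n = m then 1
             else (\<Sum>i\<in>{m..<n}. Gr i m / (hr (n - 1) * real (n - i))))"
  by pat_completeness auto
termination by (relation "Wellfounded.measure fst") auto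

declare Gr.simps[simp del]

lemma Gr_lt: "n < m \<Longrightarrow> Gr n m = 0" by (simp add: Gr.simps)
lemma Gr_eq: "Gr n n = 1" by (simp add: Gr.simps)
lemma Gr_fwd: "m < n \<Longrightarrow> Gr n m = (\<Sum>i\<in>{m..<n}. Gr i m / (hr (n - 1) * real (n - i)))"
  by (subst Gr.simps) simp

lemma Gr_last:
  "m < n \<Longrightarrow> Gr n m = (\<Sum>j=m+1..n. Gr n j / (hr (j - 1) * real (j - m)))"
proof (induction n arbitrary: m rule: less_induct)
  case (less n)
  define p where "p i = 1 / (hr (n - 1) * real (n - i))" for i
  define q where "q j = 1 / (hr (j - 1) * real (j - m))" for j
  have n1: "n \<ge> 1" using less.prems by simp
  have "Gr n m = (\<Sum>i\<in>{m..<n}. Gr i m * p i)"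
    unfolding Gr_fwd[OF less.prems] p_def by (simp add: divide_inverse)
  also have "{m..<n} = insert m {m+1..n-1}" using less.prems by auto
  also have "(\<Sum>i\<in>insert m {m+1..n-1}. Gr i m * p i) = p m + (\<Sum>i=m+1..n-1. Gr i m * p i)"
    by (simp add: Gr_eq)
  also have "(\<Sum>i=m+1..n-1. Gr i m * p i) = (\<Sum>i=m+1..n-1. \<Sum>j=m+1..i. Gr i j * q j * p i)"
  proof (rule sum.cong[OF refl])
    fix i assume i: "i \<in> {m+1..n-1}"
    have "i < n" "m < i" using i n1 by auto
    from less.IH[OF this]
    show "Gr i m * p i = (\<Sum>j=m+1..i. Gr i j * q j * p i)"
      by (simp add: q_def sum_distrib_right divide_inverse)
  qed
  also have "\<dots> = (\<Sum>j=m+1..n-1. \<Sum>i=j..n-1. Gr i j * q j * p i)"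
    using tri_swap[where g="\<lambda>j i. Gr i j * q j * p i" and p="m+1" and M="n-1"] by (rule sym)
  also have "\<dots> = (\<Sum>j=m+1..n-1. Gr n j * q j)"
  proof (rule sum.cong[OF refl])
    fix j assume j: "j \<in> {m+1..n-1}"
    have jn: "j < n" using j n1 by auto
    have "Gr n j = (\<Sum>i\<in>{j..<n}. Gr i j * p i)"
      unfolding Gr_fwd[OF jn] p_def by (simp add: divide_inverse)
    also have "{j..<n} = {j..n-1}" using n1 by auto
    finally have "Gr n j * q j = (\<Sum>i=j..n-1. Gr i j * p i) * q j" by simp
    also have "\<dots> = (\<Sum>i=j..n-1. Gr i j * q j * p i)"
      unfolding sum_distrib_right by (rule sum.cong[OF refl]) (simp add: algebra_simps)
    finally show "(\<Sum>i=j..n-1. Gr i j * q j * p i) = Gr n j * q j" by simp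
  qed
  finally have A: "Gr n m = p m + (\<Sum>j=m+1..n-1. Gr n j * q j)" .
  have S: "{m+1..n} = insert n {m+1..n-1}" using less.prems by auto
  have "(\<Sum>j=m+1..n. Gr n j / (hr (j - 1) * real (j - m))) = (\<Sum>j=m+1..n. Gr n j * q j)"
    by (simp add: q_def divide_inverse)
  also have "\<dots> = (\<Sum>j\<in>insert n {m+1..n-1}. Gr n j * q j)" by (simp only: S)
  also have "\<dots> = q n + (\<Sum>j=m+1..n-1. Gr n j * q j)"
    using n1 by (subst sum.insert) (auto simp: Gr_eq)
  also have "q n = p m" by (simp add: p_def q_def)
  finally show ?case using A by simp
qed

definition Gf :: "nat \<Rightarrow> nat \<Rightarrow> real" where
  "Gf n m = hr (m - 1) * V phi (n - 1) (m - 1)"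

lemma Gf_eq: "n \<ge> 2 \<Longrightarrow> Gf n n = 1"
proof -
  assume n: "n \<ge> 2"
  have "hr (n - 1) > 0" by (rule hr_pos) (use n in simp)
  thus ?thesis by (simp add: Gf_def V_def fd_0 phi_def)
qed

lemma Gf_last:
  assumes m: "2 \<le> m" and mn: "m < n"
  shows "Gf n m = (\<Sum>j=m+1..n. Gf n j / (hr (j - 1) * real (j - m)))"
proof -
  let ?a = "m - 1" and ?M = "n - 1"
  have a1: "1 \<le> ?a" and aM: "?a < ?M" using m mn by auto
  have "Gf n m = (\<Sum>b=?a+1..?M. V phi ?M b / real (b - ?a))"
    unfolding Gf_def using V_rec[OF a1 aM] by simp
  also have "\<dots> = (\<Sum>j=m+1..n. V phi ?M (j - 1) / real (j - m))"
  proof -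
    have "(\<Sum>j=(?a+1)+1..?M+1. V phi ?M (j - 1) / real (j - m)) = (\<Sum>b=?a+1..?M. V phi ?M (b + 1 - 1) / real (b + 1 - m))"
      by (rule sum.shift_bounds_cl_nat_ivl)
    moreover have "(?a+1)+1 = m+1" "?M+1 = n" using m mn by auto
    moreover have "(\<Sum>b=?a+1..?M. V phi ?M (b + 1 - 1) / real (b + 1 - m)) = (\<Sum>b=?a+1..?M. V phi ?M b / real (b - ?a))"
      by (rule sum.cong[OF refl]) (use m in auto)
    ultimately show ?thesis by simp
  qed
  also have "\<dots> = (\<Sum>j=m+1..n. Gf n j / (hr (j - 1) * real (j - m)))"
  proof (rule sum.cong[OF refl])
    fix j assume j: "j \<in> {m+1..n}"
    have "hr (j - 1) > 0" using j m by (intro hr_pos) auto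
    thus "V phi ?M (j - 1) / real (j - m) = Gf n j / (hr (j - 1) * real (j - m))"
      by (simp add: Gf_def)
  qed
  finally show ?thesis .
qed

lemma Gr_Gf:
  assumes "2 \<le> m" "m \<le> n"
  shows "Gr n m = Gf n m"
proof -
  have "\<forall>m. 2 \<le> m \<longrightarrow> m \<le> n \<longrightarrow> n - m = d \<longrightarrow> Gr n m = Gf n m" for d
  proof (induction d rule: less_induct)
    case (less d)
    show ?case
    proof (intro allI impI)
      fix m assume m: "2 \<le> m" "m \<le> n" "n - m = d"
      show "Gr n m = Gf n m"
      proof (cases "m = n")
        case True
        thus ?thesis using Gr_eq Gf_eq m by simp
      next
        case False
        hence mn: "m < n" using m by simp
        have "Gr n m = (\<Sum>j=m+1..n. Gr n j / (hr (j - 1) * real (j - m)))" by (rule Gr_last[OF mn])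
        also have "\<dots> = (\<Sum>j=m+1..n. Gf n j / (hr (j - 1) * real (j - m)))"
        proof (rule sum.cong[OF refl])
          fix j assume j: "j \<in> {m+1..n}"
          have "n - j < d" "2 \<le> j" "j \<le> n" using j m by auto
          thus "Gr n j / (hr (j - 1) * real (j - m)) = Gf n j / (hr (j - 1) * real (j - m))"
            using less.IH by auto
        qed
        also have "\<dots> = Gf n m" by (rule Gf_last[OF m(1) mn, symmetric])
        finally show ?thesis .
      qed
    qed
  qed
  thus ?thesis using assms by blast
qed



lemma q_split_hr: "q_split n i = (if 1 \<le> i \<and> i \<le> n - 1 then real n / (2 * hr (n - 1)) * (1 / (real i * real (n - i))) else 0)"
  by (simp add: q_split_def hr_def)

lemma q_split_nonneg: "q_split n i \<ge> 0"
  unfolding q_split_hr using hr_nonneg[of "n-1"] by auto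

lemma q_split_sym: "i \<le> n \<Longrightarrow> q_split n (n - i) = q_split n i"
  unfolding q_split_hr by (auto simp: mult.commute)

lemma sum_rev1: "(\<Sum>i=1..n-1. f (n - i)) = (\<Sum>i=1..n-1. (f i :: real))" for n :: nat
proof (cases "n \<ge> 1")
  case True
  have "(\<Sum>i=1..n-1. f i) = (\<Sum>i=1..n-1. f (n - 1 + 1 - i))" by (rule sum.atLeastAtMost_rev)
  thus ?thesis using True by simp
qed simp

lemma q_sum:
  assumes n: "n \<ge> 2"
  shows "(\<Sum>i=1..n-1. q_split n i) = 1"
proof -
  have h: "hr (n - 1) > 0" using n by (intro hr_pos) simp
  have "(\<Sum>i=1..n-1. q_split n i) = (\<Sum>i=1..n-1. real n / (2 * hr (n - 1)) * (1 / (real i * real (n - i))))"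
    by (rule sum.cong) (auto simp: q_split_hr)
  also have "\<dots> = real n / (2 * hr (n - 1)) * (\<Sum>i=1..n-1. (1 / real n) * (1 / real i + 1 / real (n - i)))"
    unfolding sum_distrib_left
  proof (rule sum.cong[OF refl])
    fix i assume i: "i \<in> {1..n-1}"
    have "real (n - i) > 0" "real i > 0" using i by auto
    hence "1 / (real i * real (n - i)) = (1 / real n) * (1 / real i + 1 / real (n - i))"
      using i by (simp add: divide_simps of_nat_diff)
    thus "real n / (2 * hr (n - 1)) * (1 / (real i * real (n - i))) = real n / (2 * hr (n - 1)) * ((1 / real n) * (1 / real i + 1 / real (n - i)))"
      by simp
  qed
  also have "(\<Sum>i=1..n-1. (1 / real n) * (1 / real i + 1 / real (n - i))) = (1 / real n) * (2 * hr (n - 1))"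
  proof -
    have "(\<Sum>i=1..n-1. 1 / real (n - i)) = hr (n - 1)"
      unfolding hr_def using sum_rev1[of "\<lambda>i. 1 / real i" n] by simp
    hence "(\<Sum>i=1..n-1. (1 / real i + 1 / real (n - i))) = 2 * hr (n - 1)"
      by (simp add: sum.distrib hr_def)
    thus ?thesis by (simp only: sum_distrib_left[symmetric])
  qed
  finally show ?thesis using h n by simp
qed

lemma pmf_q:
  assumes n: "n \<ge> 2"
  shows "pmf (q_pmf n) i = q_split n i"
proof -
  have "(\<integral>\<^sup>+x. ennreal (q_split n x) \<partial>count_space UNIV) = (\<Sum>x\<in>{1..n-1}. ennreal (q_split n x))"
    by (rule nn_integral_count_space') (auto simp: q_split_def)
  also have "\<dots> = ennreal (\<Sum>x\<in>{1..n-1}. q_split n x)"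
    by (rule sum_ennreal) (simp add: q_split_nonneg)
  also have "\<dots> = 1" using q_sum[OF n] by simp
  finally have "(\<integral>\<^sup>+x. ennreal (q_split n x) \<partial>count_space UNIV) = 1" .
  thus ?thesis unfolding q_pmf_def by (subst pmf_embed_pmf) (auto simp: q_split_nonneg)
qed

lemma set_q:
  assumes n: "n \<ge> 2"
  shows "set_pmf (q_pmf n) \<subseteq> {1..n-1}"
proof
  fix i assume "i \<in> set_pmf (q_pmf n)"
  hence "pmf (q_pmf n) i \<noteq> 0" by (simp add: set_pmf_eq)
  thus "i \<in> {1..n-1}" using pmf_q[OF n] by (auto simp: q_split_def split: if_splits)
qed

lemma fin_dtcs: "finite (set_pmf (dtcs_aux f n))"
proof (induction f arbitrary: n)
  case 0 then show ?case by simp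
next
  case (Suc f)
  show ?case
  proof (cases "n \<le> 1")
    case True then show ?thesis by simp
  next
    case False
    hence "finite (set_pmf (q_pmf n))" using set_q[of n] finite_subset by auto
    thus ?thesis using False Suc.IH by simp
  qed
qed

lemma leaves_dtcs: "1 \<le> n \<Longrightarrow> n \<le> Suc f \<Longrightarrow> t \<in> set_pmf (dtcs_aux f n) \<Longrightarrow> leaves t = n"
proof (induction f arbitrary: n t)
  case 0 then show ?case by simp
next
  case (Suc f)
  show ?case
  proof (cases "n \<le> 1")
    case True then show ?thesis using Suc.prems by simp
  next
    case False
    then obtain i l r where i: "i \<in> set_pmf (q_pmf n)" and l: "l \<in> set_pmf (dtcs_aux f i)"
      and r: "r \<in> set_pmf (dtcs_aux f (n - i))" and t: "t = Node l r"
      using Suc.prems by auto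
    have ii: "1 \<le> i" "i \<le> n - 1" using set_q[of n] i False by auto
    have "leaves l = i" by (rule Suc.IH) (use ii l Suc.prems in auto)
    moreover have "leaves r = n - i" by (rule Suc.IH) (use ii r Suc.prems in auto)
    ultimately show ?thesis using t ii by simp
  qed
qed

lemma exp_bind_fin:
  fixes h :: "'b \<Rightarrow> real"
  assumes "finite (set_pmf p)" "\<And>x. x \<in> set_pmf p \<Longrightarrow> finite (set_pmf (g x))"
  shows "measure_pmf.expectation (p \<bind> g) h = measure_pmf.expectation p (\<lambda>x. measure_pmf.expectation (g x) h)"
proof -
  have "measure_pmf.expectation (p \<bind> g) h = (\<Sum>a\<in>set_pmf p. pmf p a *\<^sub>R measure_pmf.expectation (g a) h)"
    by (rule pmf_expectation_bind) (use assms in auto)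
  also have "\<dots> = measure_pmf.expectation p (\<lambda>x. measure_pmf.expectation (g x) h)"
    by (rule integral_measure_pmf[symmetric]) (use assms in auto)
  finally show ?thesis .
qed



lemma exp_cong_supp:
  fixes f g :: "'a \<Rightarrow> real"
  assumes "\<And>x. x \<in> set_pmf p \<Longrightarrow> f x = g x"
  shows "measure_pmf.expectation p f = measure_pmf.expectation p g"
  by (rule integral_cong_AE) (use assms in \<open>auto simp: AE_measure_pmf_iff\<close>)

lemma exp_add_const:
  fixes h :: "'a \<Rightarrow> real"
  assumes "finite (set_pmf p)"
  shows "measure_pmf.expectation p (\<lambda>x. c + h x) = c + measure_pmf.expectation p h"
proof -
  have "measure_pmf.expectation p (\<lambda>x. c + h x) = measure_pmf.expectation p (\<lambda>x. c) + measure_pmf.expectation p h"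
    by (rule Bochner_Integration.integral_add) (use assms in \<open>auto intro: integrable_measure_pmf_finite\<close>)
  thus ?thesis by simp
qed

abbreviation Ek :: "nat \<Rightarrow> tree pmf \<Rightarrow> real" where
  "Ek k p \<equiv> measure_pmf.expectation p (\<lambda>t. real (nclades k t))"

lemma E_step:
  assumes n: "2 \<le> n" "n \<le> Suc (Suc f)"
  shows "Ek k (dtcs_aux (Suc f) n) = (\<Sum>i=1..n-1. q_split n i *
           ((if n = k then 1 else 0) + Ek k (dtcs_aux f i) + Ek k (dtcs_aux f (n - i))))"
proof -
  let ?D = "dtcs_aux f"
  have fin: "finite (set_pmf (?D m))" for m by (rule fin_dtcs)
  have finq: "finite (set_pmf (q_pmf n))" using set_q[of n] n finite_subset by auto
  have eq: "dtcs_aux (Suc f) n = q_pmf n \<bind> (\<lambda>i. ?D i \<bind> (\<lambda>l. ?D (n - i) \<bind> (\<lambda>r. return_pmf (Node l r))))"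
    using n by simp
  have inner: "measure_pmf.expectation (?D i \<bind> (\<lambda>l. ?D (n - i) \<bind> (\<lambda>r. return_pmf (Node l r)))) (\<lambda>t. real (nclades k t))
      = (if n = k then 1 else 0) + Ek k (?D i) + Ek k (?D (n - i))" if i: "i \<in> {1..n-1}" for i
  proof -
    have "measure_pmf.expectation (?D i \<bind> (\<lambda>l. ?D (n - i) \<bind> (\<lambda>r. return_pmf (Node l r)))) (\<lambda>t. real (nclades k t))
        = measure_pmf.expectation (?D i) (\<lambda>l. measure_pmf.expectation (?D (n - i) \<bind> (\<lambda>r. return_pmf (Node l r))) (\<lambda>t. real (nclades k t)))"
      by (rule exp_bind_fin) (auto simp: fin)
    also have "\<dots> = measure_pmf.expectation (?D i) (\<lambda>l. measure_pmf.expectation (?D (n - i)) (\<lambda>r. real (nclades k (Node l r))))"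
      by (rule exp_cong_supp, subst exp_bind_fin) (auto simp: fin)
    also have "\<dots> = measure_pmf.expectation (?D i) (\<lambda>l. ((if n = k then 1 else 0) + real (nclades k l)) + Ek k (?D (n - i)))"
    proof (rule exp_cong_supp)
      fix l assume l: "l \<in> set_pmf (?D i)"
      have ll: "leaves l = i" by (rule leaves_dtcs[OF _ _ l]) (use i n in auto)
      have "measure_pmf.expectation (?D (n - i)) (\<lambda>r. real (nclades k (Node l r)))
          = measure_pmf.expectation (?D (n - i)) (\<lambda>r. ((if n = k then 1 else 0) + real (nclades k l)) + real (nclades k r))"
      proof (rule exp_cong_supp)
        fix r assume r: "r \<in> set_pmf (?D (n - i))"
        have lr: "leaves r = n - i" by (rule leaves_dtcs[OF _ _ r]) (use i n in auto)
        show "real (nclades k (Node l r)) = ((if n = k then 1 else 0) + real (nclades k l)) + real (nclades k r)"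
          using ll lr i by auto
      qed
      also have "\<dots> = ((if n = k then 1 else 0) + real (nclades k l)) + Ek k (?D (n - i))"
        by (rule exp_add_const[OF fin])
      finally show "measure_pmf.expectation (?D (n - i)) (\<lambda>r. real (nclades k (Node l r)))
          = ((if n = k then 1 else 0) + real (nclades k l)) + Ek k (?D (n - i))" .
    qed
    also have "\<dots> = measure_pmf.expectation (?D i) (\<lambda>l. ((if n = k then 1 else 0) + Ek k (?D (n - i))) + real (nclades k l))"
      by (simp add: add_ac)
    also have "\<dots> = (if n = k then 1 else 0) + Ek k (?D (n - i)) + Ek k (?D i)"
      by (rule exp_add_const[OF fin])
    finally show ?thesis by simp
  qed
  have "Ek k (dtcs_aux (Suc f) n) = measure_pmf.expectation (q_pmf n)
      (\<lambda>i. measure_pmf.expectation (?D i \<bind> (\<lambda>l. ?D (n - i) \<bind> (\<lambda>r. return_pmf (Node l r)))) (\<lambda>t. real (nclades k t)))"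
    unfolding eq by (rule exp_bind_fin) (auto simp: finq fin)
  also have "\<dots> = (\<Sum>i\<in>{1..n-1}. pmf (q_pmf n) i *\<^sub>R
      measure_pmf.expectation (?D i \<bind> (\<lambda>l. ?D (n - i) \<bind> (\<lambda>r. return_pmf (Node l r)))) (\<lambda>t. real (nclades k t)))"
    by (rule integral_measure_pmf) (use set_q[OF n(1)] in auto)
  also have "\<dots> = (\<Sum>i=1..n-1. q_split n i *
           ((if n = k then 1 else 0) + Ek k (dtcs_aux f i) + Ek k (dtcs_aux f (n - i))))"
    by (rule sum.cong[OF refl]) (simp add: inner pmf_q[OF n(1)])
  finally show ?thesis .
qed

lemma E_rec:
  fixes Aseq :: "nat \<Rightarrow> real"
  assumes A01: "\<And>n. n \<le> 1 \<Longrightarrow> Aseq n = (if k = 1 then 1 else 0)"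
    and Arec: "\<And>n. n \<ge> 2 \<Longrightarrow> Aseq n = (if n = k then 1 else 0) + (\<Sum>i=1..n-1. q_split n i * (Aseq i + Aseq (n - i)))"
  shows "n \<le> Suc f \<Longrightarrow> Ek k (dtcs_aux f n) = Aseq n"
proof (induction f arbitrary: n)
  case 0
  then show ?case using A01[of n] by simp
next
  case (Suc f)
  show ?case
  proof (cases "n \<le> 1")
    case True then show ?thesis using A01[OF True] by simp
  next
    case False
    hence n2: "n \<ge> 2" by simp
    have "Ek k (dtcs_aux (Suc f) n) = (\<Sum>i=1..n-1. q_split n i *
           ((if n = k then 1 else 0) + Ek k (dtcs_aux f i) + Ek k (dtcs_aux f (n - i))))"
      by (rule E_step) (use n2 Suc.prems in auto)
    also have "\<dots> = (\<Sum>i=1..n-1. q_split n i * ((if n = k then 1 else 0) + (Aseq i + Aseq (n - i))))"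
    proof (rule sum.cong[OF refl])
      fix i assume i: "i \<in> {1..n-1}"
      have "Ek k (dtcs_aux f i) = Aseq i" by (rule Suc.IH) (use i Suc.prems in auto)
      moreover have "Ek k (dtcs_aux f (n - i)) = Aseq (n - i)" by (rule Suc.IH) (use i Suc.prems in auto)
      ultimately show "q_split n i * ((if n = k then 1 else 0) + Ek k (dtcs_aux f i) + Ek k (dtcs_aux f (n - i)))
          = q_split n i * ((if n = k then 1 else 0) + (Aseq i + Aseq (n - i)))" by simp
    qed
    also have "\<dots> = (if n = k then 1 else 0) * (\<Sum>i=1..n-1. q_split n i) + (\<Sum>i=1..n-1. q_split n i * (Aseq i + Aseq (n - i)))"
      by (simp add: algebra_simps sum.distrib sum_distrib_left)
    also have "\<dots> = Aseq n" using q_sum[OF n2] Arec[OF n2] by simp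
    finally show ?thesis .
  qed
qed

lemma E_DTCS:
  fixes Aseq :: "nat \<Rightarrow> real"
  assumes "\<And>n. n \<le> 1 \<Longrightarrow> Aseq n = (if k = 1 then 1 else 0)"
    and "\<And>n. n \<ge> 2 \<Longrightarrow> Aseq n = (if n = k then 1 else 0) + (\<Sum>i=1..n-1. q_split n i * (Aseq i + Aseq (n - i)))"
  shows "Ek k (DTCS n) = Aseq n"
  unfolding DTCS_def by (rule E_rec) (use assms in auto)



lemma choose_step: "real (Suc j) * real (a + Suc j choose a) = real (a + Suc j) * real (a + j choose a)"
proof -
  have "(a + Suc j - a) * (a + Suc j choose a) = (a + Suc j) * (a + Suc j - 1 choose a)"
    by (rule binomial_absorb_comp)
  hence "Suc j * (a + Suc j choose a) = (a + Suc j) * (a + j choose a)" by simp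
  thus ?thesis by (metis of_nat_mult)
qed

lemma Bq_Suc: "z > 0 \<Longrightarrow> Bq z (Suc N) = Bq z N * real (Suc N) / (z + real (Suc N))"
  unfolding Bq_def by (simp add: prod.atLeast0_atMost_Suc)

lemma CB:
  assumes a: "a \<ge> 1"
  shows "real (a + N choose a) * Bq (real a) N = 1 / real a"
proof (induction N)
  case 0 then show ?case by (simp add: Bq_def)
next
  case (Suc N)
  have ap: "real a > 0" using a by simp
  have d: "real a + real (Suc N) > 0" by simp
  have "real (a + Suc N choose a) * Bq (real a) (Suc N)
      = (real (Suc N) * real (a + Suc N choose a)) * Bq (real a) N / (real a + real (Suc N))"
    unfolding Bq_Suc[OF ap] by (simp add: algebra_simps)
  also have "\<dots> = (real (a + N choose a) * Bq (real a) N) * (real (a + Suc N) / (real a + real (Suc N)))"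
  proof -
    have g: "\<And>x y B d :: real. x * y * B / d = (y * B) * (x / d)" by simp
    show ?thesis unfolding choose_step by (rule g)
  qed
  also have "real (a + Suc N) / (real a + real (Suc N)) = 1" using d by (simp only: of_nat_add) simp
  finally show ?case using Suc.IH by (simp only: mult_1_right)
qed

lemma Bq_shift:
  assumes "z > 0" "N \<ge> 1"
  shows "Bq z N = (real N / z) * Bq (z + 1) (N - 1)"
proof -
  obtain M where M: "N = Suc M" using assms(2) by (cases N) auto
  have p: "(\<Prod>l=0..Suc M. z + real l) = z * (\<Prod>l=0..M. z + 1 + real l)"
    by (subst prod.atLeast0_atMost_Suc_shift) (simp add: add.assoc)
  have q: "(\<Prod>l=0..M. z + 1 + real l) > 0" using assms by (intro prod_pos) auto
  show ?thesis unfolding M Bq_def p using assms q by (simp add: divide_simps)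
qed

lemma CB2:
  assumes a: "a \<ge> 1" and N: "N \<ge> 1"
  shows "real (a + N choose a) * Bq (real a + 1) (N - 1) = 1 / real N"
proof -
  have ap: "real a > 0" using a by simp
  have "real (a + N choose a) * Bq (real a) N = 1 / real a" by (rule CB[OF a])
  hence "real (a + N choose a) * ((real N / real a) * Bq (real a + 1) (N - 1)) = 1 / real a"
    unfolding Bq_shift[OF ap N] .
  thus ?thesis using ap N by (simp add: divide_simps) (simp add: algebra_simps)
qed

lemma Gf_decomp:
  assumes k: "k \<ge> 2" and n: "n > k"
  shows "Gf n k = Alim * hr (k - 1) / real (k - 1)
     + hr (k - 1) * real (n - 1 choose (k - 1)) * fd (n - k) (\<lambda>j. 1 / hr j - Alim / real j) (k - 1)"
proof -
  let ?a = "k - 1" and ?N = "n - k"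
  have a1: "?a \<ge> 1" using k by simp
  have nn: "n - 1 - (k - 1) = ?N" "?a + ?N = n - 1" using k n by auto
  have "fd ?N phi ?a = fd ?N (\<lambda>j. Alim * (1 / (real j + 0)) + (1 / hr j - Alim / real j)) ?a"
    by (rule fd_cong) (simp add: phi_def)
  also have "\<dots> = Alim * Bq (real ?a) ?N + fd ?N (\<lambda>j. 1 / hr j - Alim / real j) ?a"
    unfolding fd_add fd_scale using fd_inv[of ?a 0 ?N] a1 by simp
  finally have F: "fd ?N phi ?a = Alim * Bq (real ?a) ?N + fd ?N (\<lambda>j. 1 / hr j - Alim / real j) ?a" .
  have C: "real (n - 1 choose ?a) * Bq (real ?a) ?N = 1 / real ?a"
    using CB[OF a1, of ?N] nn by simp
  have "Gf n k = hr ?a * (real (n - 1 choose ?a) * fd ?N phi ?a)"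
    unfolding Gf_def V_def using nn by simp
  also have "\<dots> = hr ?a * (Alim * (real (n - 1 choose ?a) * Bq (real ?a) ?N)
        + real (n - 1 choose ?a) * fd ?N (\<lambda>j. 1 / hr j - Alim / real j) ?a)"
    unfolding F by (simp add: algebra_simps)
  also have "\<dots> = Alim * hr (k - 1) / real (k - 1)
     + hr (k - 1) * real (n - 1 choose (k - 1)) * fd (n - k) (\<lambda>j. 1 / hr j - Alim / real j) (k - 1)"
    unfolding C by (simp add: algebra_simps)
  finally show ?thesis .
qed

lemma err_bound:
  assumes k: "k \<ge> 2" and n: "n > k"
  shows "0 \<le> hr (k - 1) * real (n - 1 choose (k - 1)) * fd (n - k) (\<lambda>j. 1 / hr j - Alim / real j) (k - 1)
     \<and> hr (k - 1) * real (n - 1 choose (k - 1)) * fd (n - k) (\<lambda>j. 1 / hr j - Alim / real j) (k - 1)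
       \<le> hr (k - 1) / real (n - k)"
proof -
  let ?a = "k - 1" and ?N = "n - k"
  have a1: "?a \<ge> 1" and N1: "?N \<ge> 1" using k n by auto
  have nn: "?a + ?N = n - 1" using k n by auto
  have T: "0 \<le> fd ?N (\<lambda>j. 1 / hr j - Alim / real j) ?a" "fd ?N (\<lambda>j. 1 / hr j - Alim / real j) ?a \<le> Bq (real ?a + 1) (?N - 1)"
    using T_bound[OF N1 a1] by auto
  have C2: "real (n - 1 choose ?a) * Bq (real ?a + 1) (?N - 1) = 1 / real ?N"
    using CB2[OF a1 N1] nn by simp
  have h: "hr ?a \<ge> 0" by (rule hr_nonneg)
  have c: "real (n - 1 choose ?a) \<ge> 0" by simp
  have "hr ?a * real (n - 1 choose ?a) * fd ?N (\<lambda>j. 1 / hr j - Alim / real j) ?a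
      \<le> hr ?a * real (n - 1 choose ?a) * Bq (real ?a + 1) (?N - 1)"
    using T h c by (intro mult_left_mono) auto
  also have "\<dots> = hr ?a / real ?N" using C2 by (simp add: mult.assoc)
  finally show ?thesis using T h c by simp
qed



lemma Aseq_k2_rec:
  assumes k: "k \<ge> 2" and n: "n \<ge> 2"
  shows "real n * Gr n k / real k = (if n = k then 1 else 0)
     + (\<Sum>i=1..n-1. q_split n i * (real i * Gr i k / real k + real (n - i) * Gr (n - i) k / real k))"
proof -
  define A where "A i = real i * Gr i k / real k" for i
  have h: "hr (n - 1) > 0" using n by (intro hr_pos) simp
  have sym: "(\<Sum>i=1..n-1. q_split n i * A (n - i)) = (\<Sum>i=1..n-1. q_split n i * A i)"
  proof -
    have "(\<Sum>i=1..n-1. q_split n i * A (n - i)) = (\<Sum>i=1..n-1. q_split n (n - i) * A (n - i))"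
      by (rule sum.cong[OF refl]) (use q_split_sym in auto)
    also have "\<dots> = (\<Sum>i=1..n-1. q_split n i * A i)"
      by (rule sum_rev1[of "\<lambda>i. q_split n i * A i" n])
    finally show ?thesis .
  qed
  have tm: "q_split n i * A i = (real n / (2 * real k)) * (Gr i k / (hr (n - 1) * real (n - i)))"
    if i: "i \<in> {1..n-1}" for i
  proof -
    have "real i > 0" "real (n - i) > 0" using i by auto
    thus ?thesis using i h unfolding q_split_hr A_def by (simp add: divide_simps)
  qed
  define S where "S = (\<Sum>i=1..n-1. Gr i k / (hr (n - 1) * real (n - i)))"
  have "(\<Sum>i=1..n-1. q_split n i * (A i + A (n - i))) = 2 * (\<Sum>i=1..n-1. q_split n i * A i)"
    using sym by (simp add: algebra_simps sum.distrib)
  also have "\<dots> = 2 * (\<Sum>i=1..n-1. (real n / (2 * real k)) * (Gr i k / (hr (n - 1) * real (n - i))))"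
    using tm by simp
  also have "\<dots> = real n / real k * S"
    unfolding S_def sum_distrib_left[symmetric] by simp
  finally have R: "(\<Sum>i=1..n-1. q_split n i * (A i + A (n - i))) = real n / real k * S" .
  show ?thesis
  proof (cases "n \<le> k")
    case True
    have S0: "S = 0" unfolding S_def
    proof (rule sum.neutral, rule ballI)
      fix i assume "i \<in> {1..n-1}"
      hence "i < k" using True by auto
      thus "Gr i k / (hr (n - 1) * real (n - i)) = 0" by (simp add: Gr_lt)
    qed
    show ?thesis
    proof (cases "n = k")
      case True thus ?thesis using R S0 k by (simp add: A_def Gr_eq)
    next
      case False
      hence "n < k" using \<open>n \<le> k\<close> by simp
      thus ?thesis using R S0 by (simp add: A_def Gr_lt)
    qed
  next
    case False
    hence kn: "k < n" by simp
    have "S = (\<Sum>i\<in>{k..<n}. Gr i k / (hr (n - 1) * real (n - i)))"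
      unfolding S_def
    proof (rule sum.mono_neutral_right)
      show "finite {1..n-1}" by simp
      show "{k..<n} \<subseteq> {1..n-1}" using k by auto
      show "\<forall>i\<in>{1..n-1} - {k..<n}. Gr i k / (hr (n - 1) * real (n - i)) = 0"
        using kn by (auto simp: Gr_lt)
    qed
    also have "\<dots> = Gr n k" by (rule Gr_fwd[OF kn, symmetric])
    finally show ?thesis using R kn by (simp add: A_def)
  qed
qed

theorem lemma4p1:
  fixes k :: nat
  shows "\<exists>\<mu>::real. (\<lambda>n::nat. measure_pmf.expectation (DTCS n) (\<lambda>t. real (nclades k t)) / real n - \<mu>)
            \<in> O(\<lambda>n. 1 / real n)"
proof -
  consider "k = 0" | "k = 1" | "k \<ge> 2" by linarith
  then show ?thesis
  proof cases
    case 1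
    have E: "Ek k (DTCS n) = (\<lambda>_. 0) n" for n
      by (rule E_DTCS) (use 1 in auto)
    show ?thesis
      by (rule exI[of _ 0], rule bigoI[where c = 0]) (simp add: E)
  next
    case 2
    have E: "Ek k (DTCS n) = (\<lambda>n. if n = 0 then 1 else real n) n" for n
    proof (rule E_DTCS)
      show "\<And>n. n \<le> 1 \<Longrightarrow> (if n = 0 then 1 else real n) = (if k = 1 then 1 else 0)"
        using 2 by auto
      fix n :: nat assume n: "n \<ge> 2"
      have "(\<Sum>i=1..n-1. q_split n i * ((if i = 0 then 1 else real i) + (if n - i = 0 then 1 else real (n - i))))
          = (\<Sum>i=1..n-1. q_split n i * real n)"
        by (rule sum.cong[OF refl]) (auto simp: of_nat_diff)
      also have "\<dots> = real n" using q_sum[OF n] by (simp add: sum_distrib_right[symmetric])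
      finally show "(if n = 0 then 1 else real n) = (if n = k then 1 else 0) +
          (\<Sum>i=1..n-1. q_split n i * ((if i = 0 then 1 else real i) + (if n - i = 0 then 1 else real (n - i))))"
        using n 2 by simp
    qed
    show ?thesis
    proof (rule exI[of _ 1], rule bigoI[where c = 0])
      show "\<forall>\<^sub>F n in at_top. norm (Ek k (DTCS n) / real n - 1) \<le> 0 * norm (1 / real n)"
        using eventually_ge_at_top[of "1::nat"] by eventually_elim (simp add: E)
    qed
  next
    case 3
    define \<mu> where "\<mu> = Alim * hr (k - 1) / real (k - 1) / real k"
    have E: "Ek k (DTCS n) = (\<lambda>n. real n * Gr n k / real k) n" for n
    proof (rule E_DTCS)
      show "\<And>n. n \<le> 1 \<Longrightarrow> real n * Gr n k / real k = (if k = 1 then 1 else 0)"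
        using 3 by (auto simp: Gr_lt)
      show "\<And>n. n \<ge> 2 \<Longrightarrow> real n * Gr n k / real k = (if n = k then 1 else 0) +
          (\<Sum>i=1..n-1. q_split n i * (real i * Gr i k / real k + real (n - i) * Gr (n - i) k / real k))"
        by (rule Aseq_k2_rec[OF 3])
    qed
    have kp: "real k > 0" using 3 by simp
    have bound: "norm (Ek k (DTCS n) / real n - \<mu>) \<le> (2 * hr (k - 1) / real k) * norm (1 / real n)"
      if n: "n \<ge> 2 * k" for n
    proof -
      have kn: "k < n" using n 3 by simp
      have np: "real n > 0" using kn by simp
      define err where "err = hr (k - 1) * real (n - 1 choose (k - 1)) * fd (n - k) (\<lambda>j. 1 / hr j - Alim / real j) (k - 1)"
      have eb: "0 \<le> err" "err \<le> hr (k - 1) / real (n - k)"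
        using err_bound[OF 3 kn] unfolding err_def by auto
      have "Ek k (DTCS n) / real n = Gr n k / real k" using E np by simp
      also have "Gr n k = Gf n k" by (rule Gr_Gf) (use 3 kn in auto)
      also have "Gf n k = Alim * hr (k - 1) / real (k - 1) + err"
        unfolding err_def by (rule Gf_decomp[OF 3 kn])
      finally have "Ek k (DTCS n) / real n - \<mu> = err / real k"
        unfolding \<mu>_def by (simp add: add_divide_distrib)
      hence "norm (Ek k (DTCS n) / real n - \<mu>) = err / real k" using eb kp by simp
      also have "\<dots> \<le> hr (k - 1) / real (n - k) / real k"
        using eb kp by (intro divide_right_mono) auto
      also have "\<dots> \<le> (2 * hr (k - 1) / real k) * norm (1 / real n)"
      proof -
        have nk: "real (n - k) \<ge> real n / 2" using n kn by (simp add: of_nat_diff)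
        have nkp: "real (n - k) > 0" using kn by simp
        have hh: "hr (k - 1) \<ge> 0" by (rule hr_nonneg)
        have "hr (k - 1) / real (n - k) \<le> hr (k - 1) / (real n / 2)"
          using nk nkp np hh by (intro divide_left_mono) auto
        hence "hr (k - 1) / real (n - k) / real k \<le> hr (k - 1) / (real n / 2) / real k"
          using kp by (intro divide_right_mono) auto
        also have "\<dots> = (2 * hr (k - 1) / real k) * norm (1 / real n)"
          using np kp by (simp add: mult.commute)
        finally show ?thesis .
      qed
      finally show ?thesis .
    qed
    show ?thesis
    proof (rule exI[of _ \<mu>], rule bigoI[where c = "2 * hr (k - 1) / real k"])
      show "\<forall>\<^sub>F n in at_top. norm (Ek k (DTCS n) / real n - \<mu>) \<le> (2 * hr (k - 1) / real k) * norm (1 / real n)"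
        using eventually_ge_at_top[of "2 * k"] by eventually_elim (rule bound)
    qed
  qed
qed


end
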